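(* Let $F$ be a field and $f\in F[t]$ a monic irreducible polynomial of degree $d\ge1$. Then $B_f(F(t))$ is generated, as a $\mathbb{Q}$-vector space, by $B_{d-1}(F(t))$ together with the elements $\{x_f(a,b)\}_2$, $a,b\in (F[t]/(f))^*$.
   Context: For a field $K$, $K^*$ means $K^*\otimes_{\mathbb{Z}}\mathbb{Q}$, exterior powers are over $\mathbb{Q}$. $B_2(K)=\mathbb{Q}[\mathbb{P}^1(K)]/R_2(K)$ with $\mathbb{Q}[\mathbb{P}^1(K)]$ having basis $\{x\}_2$, $x\in\mathbb{P}^1(K)$, and $R_2(K)$ spanned by $\{0\}_2,\{\infty\}_2$ and $\sum_{i=1}^5(-1)^i\{r(x_1,\dots,\hat x_i,\dots,x_5)\}_2$ (pairwise distinct $x_j$, $r(a,b,c,d)=\frac{(a-b)(c-d)}{(c-b)(a-d)}$); $\delta_2(\{x\}_2)=x\wedge(1-x)$. For $e\ge 0$, $V_e\subset F(t)^*\otimes\mathbb{Q}$ is the span of nonzero polynomials of degree $\le e$, and $B_e(F(t))=\{y\in B_2(F(t)):\delta_2(y)\in\bigwedge^2V_e\}$. $F(t)^*_f$ is the span of $V_{d-1}$ and $f$, and $B_f(F(t))=\{y\in B_2(F(t)):\delta_2(y)\in\bigwedge^2F(t)^*_f\}$ (so $B_{d-1}(F(t))\subset B_f(F(t))$). For nonzero $a,b\in F[t]/(f)$: with $\overline a,\overline b$ the representatives of degree $<d$ and $r\ne0$ the remainder of $\overline a\,\overline b$ modulo $f$, $x_f(a,b)=\overline a\,\overline b/r\in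 F(t)^*$. *)

theory Defs
  imports "HOL-Computational_Algebra.Polynomial" "HOL-Computational_Algebra.Fraction_Field"
begin

text \<open>Q-vector spaces are modelled as rational-valued functions with pointwise operations
(free Q-vector spaces = finitely supported functions); subspaces of quotients are represented
by their preimages.\<close>

definition vzero :: "'b \<Rightarrow> rat" where "vzero = (\<lambda>_. 0)"
definition vadd :: "('b \<Rightarrow> rat) \<Rightarrow> ('b \<Rightarrow> rat) \<Rightarrow> 'b \<Rightarrow> rat" where
  "vadd u v = (\<lambda>x. u x + v x)"
definition vsub :: "('b \<Rightarrow> rat) \<Rightarrow> ('b \<Rightarrow> rat) \<Rightarrow> 'b \<Rightarrow> rat" where
  "vsub u v = (\<lambda>x. u x - v x)"
definition vscale :: "rat \<Rightarrow> ('b \<Rightarrow> rat) \<Rightarrow> 'b \<Rightarrow> rat" where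
  "vscale c v = (\<lambda>x. c * v x)"
definition bas :: "'b \<Rightarrow> 'b \<Rightarrow> rat" where
  "bas b = (\<lambda>x. if x = b then 1 else 0)"

definition fin_supp :: "('b \<Rightarrow> rat) \<Rightarrow> bool" where
  "fin_supp v \<longleftrightarrow> finite {x. v x \<noteq> 0}"

inductive_set qspan :: "('b \<Rightarrow> rat) set \<Rightarrow> ('b \<Rightarrow> rat) set" for S where
  zero: "vzero \<in> qspan S"
| gen: "v \<in> S \<Longrightarrow> v \<in> qspan S"
| add: "u \<in> qspan S \<Longrightarrow> v \<in> qspan S \<Longrightarrow> vadd u v \<in> qspan S"
| scale: "v \<in> qspan S \<Longrightarrow> vscale c v \<in> qspan S"

type_synonym 'a ratfun = "'a poly fract"

definition pfr :: "'a::field poly \<Rightarrow> 'a ratfun" where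
  "pfr p = Fract p 1"

text \<open>Exterior square of K^* tensor Q, as Q[K^x \<times> K^x] modulo the subspace wedge_rel:
biadditivity in each argument (multiplicatively) and alternation.\<close>
definition wedge_rel :: "('k::field \<times> 'k \<Rightarrow> rat) set" where
  "wedge_rel =
     {vsub (vsub (bas (u * v, w)) (bas (u, w))) (bas (v, w)) | u v w. u \<noteq> 0 \<and> v \<noteq> 0 \<and> w \<noteq> 0}
   \<union> {vsub (vsub (bas (u, v * w)) (bas (u, v))) (bas (u, w)) | u v w. u \<noteq> 0 \<and> v \<noteq> 0 \<and> w \<noteq> 0}
   \<union> {bas (u, u) | u. u \<noteq> 0}"

text \<open>Membership in the image of wedge^2 of the Q-subspace of K^* tensor Q spanned by the
set G of nonzero elements of K: z lies in span of (g \<and> h), g,h \<in> G, modulo wedge_rel.\<close>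
definition in_wedge2 :: "'k::field set \<Rightarrow> ('k \<times> 'k \<Rightarrow> rat) \<Rightarrow> bool" where
  "in_wedge2 G z \<longleftrightarrow> z \<in> qspan (wedge_rel \<union> {bas (g, h) | g h. g \<in> G \<and> h \<in> G})"

text \<open>P^1(K) = 'k option, None = \<infinity>.  Lift of delta_2 to Q[P^1(K)]:
{x}_2 \<mapsto> x \<and> (1-x) for x \<notin> {0,1,\<infinity>}, and 0 otherwise.\<close>
definition delta_gen :: "'k::field option \<Rightarrow> ('k \<times> 'k \<Rightarrow> rat)" where
  "delta_gen p = (case p of None \<Rightarrow> vzero
     | Some x \<Rightarrow> if x \<noteq> 0 \<and> x \<noteq> 1 then bas (x, 1 - x) else vzero)"

definition delta2 :: "('k::field option \<Rightarrow> rat) \<Rightarrow> ('k \<times> 'k \<Rightarrow> rat)" where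
  "delta2 y = (\<lambda>z. \<Sum>x\<in>{x. y x \<noteq> 0}. y x * delta_gen x z)"

text \<open>Cross ratio on P^1(K) (for pairwise distinct arguments), extended to \<infinity> by continuity.\<close>
definition cross_ratio :: "'k::field option \<Rightarrow> 'k option \<Rightarrow> 'k option \<Rightarrow> 'k option \<Rightarrow> 'k option" where
  "cross_ratio a b c d = (case (a, b, c, d) of
      (Some a, Some b, Some c, Some d) \<Rightarrow> Some ((a - b) * (c - d) / ((c - b) * (a - d)))
    | (None, Some b, Some c, Some d) \<Rightarrow> Some ((c - d) / (c - b))
    | (Some a, None, Some c, Some d) \<Rightarrow> Some ((c - d) / (a - d))
    | (Some a, Some b, None, Some d) \<Rightarrow> Some ((a - b) / (a - d))
    | (Some a, Some b, Some c, None) \<Rightarrow> Some ((a - b) / (c - b))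
    | _ \<Rightarrow> None)"

definition five_term :: "'k::field option \<Rightarrow> 'k option \<Rightarrow> 'k option \<Rightarrow> 'k option \<Rightarrow> 'k option
    \<Rightarrow> ('k option \<Rightarrow> rat)" where
  "five_term x1 x2 x3 x4 x5 =
     (\<lambda>p. - bas (cross_ratio x2 x3 x4 x5) p + bas (cross_ratio x1 x3 x4 x5) p
          - bas (cross_ratio x1 x2 x4 x5) p + bas (cross_ratio x1 x2 x3 x5) p
          - bas (cross_ratio x1 x2 x3 x4) p)"

definition R2_gens :: "('k::field option \<Rightarrow> rat) set" where
  "R2_gens = {bas (Some 0), bas None} \<union>
     {five_term x1 x2 x3 x4 x5 | x1 x2 x3 x4 x5. distinct [x1, x2, x3, x4, x5]}"

text \<open>Preimage in Q[P^1(K)] of {y \<in> B_2(K). delta_2 y \<in> wedge^2 span(G)}.\<close>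
definition B_sub :: "'k::field set \<Rightarrow> ('k option \<Rightarrow> rat) set" where
  "B_sub G = {y. fin_supp y \<and> in_wedge2 G (delta2 y)}"

definition V_gens :: "nat \<Rightarrow> 'a::field ratfun set" where
  "V_gens e = {pfr p | p. p \<noteq> 0 \<and> degree p \<le> e}"

definition Vf_gens :: "'a::field poly \<Rightarrow> 'a ratfun set" where
  "Vf_gens f = V_gens (degree f - 1) \<union> {pfr f}"

text \<open>x_f(a,b) for representatives a,b of degree < deg f.\<close>
definition x_f :: "'a::field poly \<Rightarrow> 'a poly \<Rightarrow> 'a poly \<Rightarrow> 'a ratfun" where
  "x_f f a b = pfr (a * b) / pfr ((a * b) mod f)"

end

theory Submission
  imports Defs "HOL-Library.Function_Algebras" "HOL-Computational_Algebra.Polynomial_Factorial"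
begin

lemma vadd_eq: "vadd u v = u + v" by (auto simp: vadd_def plus_fun_def)
lemma vsub_eq: "vsub u v = u - v" by (auto simp: vsub_def fun_eq_iff)
lemma vzero_eq: "vzero = 0" by (auto simp: vzero_def zero_fun_def)

lemma qspan_add: "u \<in> qspan S \<Longrightarrow> v \<in> qspan S \<Longrightarrow> u + v \<in> qspan S"
  using qspan.add[of u S v] by (simp add: vadd_eq)
lemma qspan_zero: "0 \<in> qspan S"
  using qspan.zero[of S] by (simp add: vzero_eq)
lemma qspan_scale: "u \<in> qspan S \<Longrightarrow> (\<lambda>x. c * u x) \<in> qspan S"
  using qspan.scale[of u S c] by (simp add: vscale_def)
lemma qspan_neg: "u \<in> qspan S \<Longrightarrow> - u \<in> qspan S"
proof -
  assume "u \<in> qspan S"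
  from qspan_scale[OF this, of "-1"] show ?thesis by (simp add: fun_Compl_def fun_Compl_def)
qed
lemma qspan_diff: "u \<in> qspan S \<Longrightarrow> v \<in> qspan S \<Longrightarrow> u - v \<in> qspan S"
  using qspan_add[of u S "- v"] qspan_neg[of v S] by simp
lemma qspan_sum: "finite A \<Longrightarrow> (\<And>i. i \<in> A \<Longrightarrow> g i \<in> qspan S) \<Longrightarrow> sum g A \<in> qspan S"
  by (induction A rule: finite_induct) (auto intro: qspan_add qspan_zero)
lemma qspan_mono: "S \<subseteq> T \<Longrightarrow> qspan S \<subseteq> qspan T"
proof
  fix x assume st: "S \<subseteq> T" and "x \<in> qspan S"
  from this(2) show "x \<in> qspan T"
    by (induction rule: qspan.induct) (use st in \<open>auto intro: qspan.intros\<close>)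
qed
lemma sum_apply: "(sum g A) x = sum (\<lambda>i. g i x) A"
  by (induction A rule: infinite_finite_induct) auto

lemma qspan_gen: "u \<in> S \<Longrightarrow> u \<in> qspan S" by (rule qspan.gen)

lemma qspan_subspace:
  assumes "S \<subseteq> V" "0 \<in> V" "\<And>u v. u \<in> V \<Longrightarrow> v \<in> V \<Longrightarrow> u + v \<in> V"
    "\<And>u c. u \<in> V \<Longrightarrow> (\<lambda>x. c * u x) \<in> V"
  shows "qspan S \<subseteq> V"
proof
  fix x assume "x \<in> qspan S" then show "x \<in> V"
    by (induction rule: qspan.induct)
       (use assms in \<open>auto simp: vzero_eq[symmetric] vadd_eq[symmetric] vscale_def\<close>)
qed

lemma fin_supp_add: "fin_supp u \<Longrightarrow> fin_supp v \<Longrightarrow> fin_supp (u + v)"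
  unfolding fin_supp_def
  by (rule finite_subset[of _ "{x. u x \<noteq> 0} \<union> {x. v x \<noteq> 0}"]) auto
lemma fin_supp_scale: "fin_supp u \<Longrightarrow> fin_supp (\<lambda>x. c * u x)"
  unfolding fin_supp_def by (rule finite_subset[of _ "{x. u x \<noteq> 0}"]) auto
lemma fin_supp_neg: "fin_supp u \<Longrightarrow> fin_supp (- u)"
  unfolding fin_supp_def by simp
lemma fin_supp_diff: "fin_supp u \<Longrightarrow> fin_supp v \<Longrightarrow> fin_supp (u - v)"
  using fin_supp_add[of u "- v"] fin_supp_neg[of v] by simp
lemma fin_supp_zero: "fin_supp 0" by (simp add: fin_supp_def)
lemma fin_supp_bas: "fin_supp (bas b)" by (simp add: fin_supp_def bas_def)
lemma fin_supp_sum: "finite A \<Longrightarrow> (\<And>i. i \<in> A \<Longrightarrow> fin_supp (g i)) \<Longrightarrow> fin_supp (sum g A)"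
  by (induction A rule: finite_induct) (auto intro: fin_supp_add fin_supp_zero)
lemma fin_supp_qspan: "(\<And>u. u \<in> S \<Longrightarrow> fin_supp u) \<Longrightarrow> v \<in> qspan S \<Longrightarrow> fin_supp v"
  using qspan_subspace[of S "Collect fin_supp"]
  by (auto intro: fin_supp_add fin_supp_scale fin_supp_zero)

definition lin_ext :: "('b \<Rightarrow> 'c \<Rightarrow> rat) \<Rightarrow> ('b \<Rightarrow> rat) \<Rightarrow> 'c \<Rightarrow> rat" where
  "lin_ext g s = (\<lambda>z. \<Sum>p\<in>{p. s p \<noteq> 0}. s p * g p z)"

lemma lin_ext_sub:
  assumes "finite A" "{p. s p \<noteq> 0} \<subseteq> A"
  shows "lin_ext g s = (\<lambda>z. \<Sum>p\<in>A. s p * g p z)"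
  unfolding lin_ext_def
  by (rule ext, rule sum.mono_neutral_left) (use assms in auto)

lemma lin_ext_add:
  assumes "fin_supp s" "fin_supp t"
  shows "lin_ext g (s + t) = lin_ext g s + lin_ext g t"
proof -
  let ?A = "{p. s p \<noteq> 0} \<union> {p. t p \<noteq> 0}"
  have f: "finite ?A" using assms by (auto simp: fin_supp_def)
  show ?thesis
    apply (subst lin_ext_sub[OF f, of "s+t"], force)
    apply (subst lin_ext_sub[OF f, of s], force)
    apply (subst lin_ext_sub[OF f, of t], force)
    by (auto simp: sum.distrib algebra_simps)
qed

lemma lin_ext_scale:
  assumes "fin_supp s"
  shows "lin_ext g (\<lambda>x. c * s x) = (\<lambda>z. c * lin_ext g s z)"
proof -
  have f: "finite {p. s p \<noteq> 0}" using assms by (auto simp: fin_supp_def)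
  show ?thesis
    apply (subst lin_ext_sub[OF f, of "\<lambda>x. c * s x"], force)
    by (auto simp: lin_ext_def sum_distrib_left algebra_simps)
qed

lemma lin_ext_neg: "fin_supp s \<Longrightarrow> lin_ext g (- s) = - lin_ext g s"
  using lin_ext_scale[of s g "-1"] by (simp add: fun_Compl_def)
lemma lin_ext_diff: "fin_supp s \<Longrightarrow> fin_supp t \<Longrightarrow> lin_ext g (s - t) = lin_ext g s - lin_ext g t"
  using lin_ext_add[of s "- t" g] lin_ext_neg[of t g] fin_supp_neg[of t] by simp
lemma lin_ext_zero: "lin_ext g 0 = 0"
proof (rule ext)
  fix z show "lin_ext g 0 z = 0 z" unfolding lin_ext_def by simp
qed
lemma lin_ext_bas: "lin_ext g (bas b) = g b"
proof -
  have "lin_ext g (bas b) = (\<lambda>z. \<Sum>p\<in>{b}. bas b p * g p z)"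
    by (rule lin_ext_sub) (auto simp: bas_def)
  then show ?thesis by (simp add: bas_def)
qed
lemma lin_ext_sum: "finite A \<Longrightarrow> (\<And>i. i \<in> A \<Longrightarrow> fin_supp (v i)) \<Longrightarrow>
   lin_ext g (sum v A) = sum (\<lambda>i. lin_ext g (v i)) A"
proof (induction A rule: finite_induct)
  case empty then show ?case by (simp only: sum.empty lin_ext_zero)
next
  case (insert x F)
  have f1: "fin_supp (v x)" "fin_supp (sum v F)" using insert by (auto intro: fin_supp_sum)
  have ih: "lin_ext g (sum v F) = (\<Sum>i\<in>F. lin_ext g (v i))" using insert by auto
  show ?case unfolding sum.insert[OF insert(1,2)] lin_ext_add[OF f1] ih by (rule refl)
qed

lemma fin_supp_expand:
  assumes "fin_supp s" shows "s = (\<Sum>p\<in>{p. s p \<noteq> 0}. (\<lambda>x. s p * bas p x))"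
proof (rule ext)
  fix x
  have f: "finite {p. s p \<noteq> 0}" using assms by (simp add: fin_supp_def)
  have "(\<Sum>p\<in>{p. s p \<noteq> 0}. (\<lambda>x. s p * bas p x)) x = (\<Sum>p\<in>{p. s p \<noteq> 0}. s p * bas p x)"
    by (simp add: sum_apply)
  also have "\<dots> = (if s x \<noteq> 0 then s x else 0)"
    using f by (simp add: bas_def if_distrib sum.delta' cong: if_cong)
  finally show "s x = (\<Sum>p\<in>{p. s p \<noteq> 0}. (\<lambda>x. s p * bas p x)) x" by auto
qed

lemma lin_ext_fin_supp:
  assumes "fin_supp s" "\<And>p. fin_supp (g p)"
  shows "fin_supp (lin_ext g s)"
proof -
  have f: "finite {p. s p \<noteq> 0}" using assms by (simp add: fin_supp_def)
  have "lin_ext g s = (\<Sum>p\<in>{p. s p \<noteq> 0}. (\<lambda>z. s p * g p z))"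
    by (auto simp: lin_ext_def sum_apply)
  then show ?thesis using f assms by (auto intro!: fin_supp_sum fin_supp_scale)
qed

lemma lin_ext_in_qspan:
  assumes "fin_supp s" "\<And>p. s p \<noteq> 0 \<Longrightarrow> g p \<in> qspan S"
  shows "lin_ext g s \<in> qspan S"
proof -
  have f: "finite {p. s p \<noteq> 0}" using assms by (simp add: fin_supp_def)
  have "lin_ext g s = (\<Sum>p\<in>{p. s p \<noteq> 0}. (\<lambda>z. s p * g p z))"
    by (auto simp: lin_ext_def sum_apply)
  then show ?thesis using f assms by (auto intro!: qspan_sum qspan_scale)
qed

lemma lin_ext_comp:
  assumes "fin_supp s" "\<And>p. fin_supp (g p)"
  shows "lin_ext h (lin_ext g s) = lin_ext (\<lambda>p. lin_ext h (g p)) s"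
proof -
  have f: "finite {p. s p \<noteq> 0}" using assms by (simp add: fin_supp_def)
  have e: "lin_ext g s = (\<Sum>p\<in>{p. s p \<noteq> 0}. (\<lambda>z. s p * g p z))"
    by (auto simp: lin_ext_def sum_apply)
  have "lin_ext h (lin_ext g s) = (\<Sum>p\<in>{p. s p \<noteq> 0}. lin_ext h (\<lambda>z. s p * g p z))"
    unfolding e using f assms by (intro lin_ext_sum fin_supp_scale) auto
  also have "\<dots> = (\<Sum>p\<in>{p. s p \<noteq> 0}. (\<lambda>z. s p * lin_ext h (g p) z))"
    using assms by (simp add: lin_ext_scale)
  also have "\<dots> = lin_ext (\<lambda>p. lin_ext h (g p)) s"
    by (auto simp: lin_ext_def sum_apply)
  finally show ?thesis .
qed

lemma delta2_lin: "delta2 = lin_ext delta_gen"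
  by (auto simp: delta2_def lin_ext_def)


abbreviation WW :: "('k::field \<times> 'k \<Rightarrow> rat) set" where "WW \<equiv> qspan wedge_rel"

lemma comb2: "a \<in> qspan S \<Longrightarrow> b \<in> qspan S \<Longrightarrow> (\<lambda>z. p * a z + q * b z) = x \<Longrightarrow> x \<in> qspan S"
proof -
  assume a: "a \<in> qspan S" and b: "b \<in> qspan S" and e: "(\<lambda>z. p * a z + q * b z) = x"
  have "(\<lambda>z. p * a z) + (\<lambda>z. q * b z) \<in> qspan S" by (intro qspan_add qspan_scale a b)
  then show ?thesis using e by (simp add: plus_fun_def)
qed

lemma W_ml: "u \<noteq> 0 \<Longrightarrow> v \<noteq> 0 \<Longrightarrow> w \<noteq> 0 \<Longrightarrow> bas (u * v, w) - bas (u, w) - bas (v, w) \<in> WW"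
  unfolding wedge_rel_def vsub_eq[symmetric] by (intro qspan_gen UnI1) blast
lemma W_mr: "u \<noteq> 0 \<Longrightarrow> v \<noteq> 0 \<Longrightarrow> w \<noteq> 0 \<Longrightarrow> bas (u, v * w) - bas (u, v) - bas (u, w) \<in> WW"
  unfolding wedge_rel_def vsub_eq[symmetric] by (intro qspan_gen UnI1 UnI2) blast
lemma W_diag: "u \<noteq> 0 \<Longrightarrow> bas (u, u) \<in> WW"
  unfolding wedge_rel_def by (intro qspan_gen UnI2) blast

lemma W_one_l: "w \<noteq> 0 \<Longrightarrow> bas (1, w) \<in> WW"
  by (rule comb2[OF W_ml[of 1 1 w] qspan_zero, where p="-1" and q=0]) (auto simp: fun_eq_iff)
lemma W_one_r: "w \<noteq> 0 \<Longrightarrow> bas (w, 1) \<in> WW"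
  by (rule comb2[OF W_mr[of w 1 1] qspan_zero, where p="-1" and q=0]) (auto simp: fun_eq_iff)

lemma W_inv_l: "u \<noteq> 0 \<Longrightarrow> w \<noteq> 0 \<Longrightarrow> bas (inverse u, w) + bas (u, w) \<in> WW"
  by (rule comb2[OF W_one_l[of w] W_ml[of u "inverse u" w], where p=1 and q="-1"]) (auto simp: fun_eq_iff)
lemma W_inv_r: "u \<noteq> 0 \<Longrightarrow> w \<noteq> 0 \<Longrightarrow> bas (w, inverse u) + bas (w, u) \<in> WW"
  by (rule comb2[OF W_one_r[of w] W_mr[of w u "inverse u"], where p=1 and q="-1"]) (auto simp: fun_eq_iff)

lemma W_div_l: "u \<noteq> 0 \<Longrightarrow> v \<noteq> 0 \<Longrightarrow> w \<noteq> 0 \<Longrightarrow> bas (u / v, w) - bas (u, w) + bas (v, w) \<in> WW"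
  by (rule comb2[OF W_ml[of u "inverse v" w] W_inv_l[of v w], where p=1 and q=1]) (auto simp: fun_eq_iff divide_inverse)
lemma W_div_r: "u \<noteq> 0 \<Longrightarrow> v \<noteq> 0 \<Longrightarrow> w \<noteq> 0 \<Longrightarrow> bas (w, u / v) - bas (w, u) + bas (w, v) \<in> WW"
  by (rule comb2[OF W_mr[of w u "inverse v"] W_inv_r[of v w], where p=1 and q=1]) (auto simp: fun_eq_iff divide_inverse)

lemma W_m1_l: "w \<noteq> 0 \<Longrightarrow> bas (-1, w) \<in> WW"
  by (rule comb2[OF W_ml[of "-1" "-1" w] W_one_l[of w], where p="-1/2" and q="1/2"]) (auto simp: fun_eq_iff field_simps)
lemma W_m1_r: "w \<noteq> 0 \<Longrightarrow> bas (w, -1) \<in> WW"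
  by (rule comb2[OF W_mr[of w "-1" "-1"] W_one_r[of w], where p="-1/2" and q="1/2"]) (auto simp: fun_eq_iff field_simps)

lemma W_neg_l: "u \<noteq> 0 \<Longrightarrow> w \<noteq> 0 \<Longrightarrow> bas (-u, w) - bas (u, w) \<in> WW"
  by (rule comb2[OF W_ml[of "-1" u w] W_m1_l[of w], where p=1 and q=1]) (auto simp: fun_eq_iff)
lemma W_neg_r: "u \<noteq> 0 \<Longrightarrow> w \<noteq> 0 \<Longrightarrow> bas (w, -u) - bas (w, u) \<in> WW"
  by (rule comb2[OF W_mr[of w "-1" u] W_m1_r[of w], where p=1 and q=1]) (auto simp: fun_eq_iff)

lemma W_anti: "u \<noteq> 0 \<Longrightarrow> v \<noteq> 0 \<Longrightarrow> bas (u, v) + bas (v, u) \<in> WW"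
proof -
  assume u: "u \<noteq> 0" and v: "v \<noteq> 0"
  have uv: "u * v \<noteq> 0" using u v by simp
  have a: "bas (u * v, u * v) - bas (u, u * v) - bas (v, u * v) \<in> WW" using W_ml[OF u v uv] .
  have b: "bas (u, u * v) - bas (u, u) - bas (u, v) \<in> WW" using W_mr[OF u u v] .
  have c: "bas (v, u * v) - bas (v, u) - bas (v, v) \<in> WW" using W_mr[OF v u v] .
  have s: "bas (u * v, u * v) - bas (u, u) - bas (v, v) \<in> WW"
    using qspan_add[OF qspan_add[OF qspan_add[OF W_diag[OF uv] qspan_neg[OF W_diag[OF u]]]
       qspan_neg[OF W_diag[OF v]]] qspan_zero] by simp
  have "(bas (u * v, u * v) - bas (u, u) - bas (v, v)) - ((bas (u * v, u * v) - bas (u, u * v) - bas (v, u * v))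
     + (bas (u, u * v) - bas (u, u) - bas (u, v)) + (bas (v, u * v) - bas (v, u) - bas (v, v)))
     = bas (u, v) + bas (v, u)" by (simp add: fun_eq_iff)
  moreover have "(bas (u * v, u * v) - bas (u, u) - bas (v, v)) - ((bas (u * v, u * v) - bas (u, u * v) - bas (v, u * v))
     + (bas (u, u * v) - bas (u, u) - bas (u, v)) + (bas (v, u * v) - bas (v, u) - bas (v, v))) \<in> WW"
    by (intro qspan_diff qspan_add s a b c)
  ultimately show ?thesis by (simp add: add.commute)
qed

text \<open>Products with exponents +1/-1.\<close>
fun pw :: "('k::field \<times> bool) list \<Rightarrow> 'k" where
  "pw [] = 1"
| "pw ((x, True) # xs) = x * pw xs"
| "pw ((x, False) # xs) = pw xs / x"

definition sg :: "bool \<Rightarrow> rat" where "sg b = (if b then 1 else -1)"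

fun EE1 :: "('k::field \<times> bool) list \<Rightarrow> 'k \<Rightarrow> ('k \<times> 'k \<Rightarrow> rat)" where
  "EE1 [] w = 0"
| "EE1 ((x, e) # xs) w = (\<lambda>z. sg e * bas (x, w) z) + EE1 xs w"

fun EE2 :: "'k \<Rightarrow> ('k::field \<times> bool) list \<Rightarrow> ('k \<times> 'k \<Rightarrow> rat)" where
  "EE2 w [] = 0"
| "EE2 w ((x, e) # xs) = (\<lambda>z. sg e * bas (w, x) z) + EE2 w xs"

fun EE :: "('k::field \<times> bool) list \<Rightarrow> ('k \<times> bool) list \<Rightarrow> ('k \<times> 'k \<Rightarrow> rat)" where
  "EE [] ys = 0"
| "EE ((x, e) # xs) ys = (\<lambda>z. sg e * EE2 x ys z) + EE xs ys"

lemma pw_nz: "(\<forall>p\<in>set xs. fst p \<noteq> 0) \<Longrightarrow> pw xs \<noteq> 0"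
  by (induction xs rule: pw.induct) auto

lemma EE2_W: "w \<noteq> 0 \<Longrightarrow> (\<forall>p\<in>set ys. fst p \<noteq> 0) \<Longrightarrow> bas (w, pw ys) - EE2 w ys \<in> WW"
proof (induction ys rule: pw.induct)
  case 1 then show ?case using W_one_r[of w] by (simp add: fun_eq_iff zero_fun_def)
next
  case (2 x xs)
  have nz: "pw xs \<noteq> 0" using 2 pw_nz by auto
  have ih: "bas (w, pw xs) - EE2 w xs \<in> WW" by (rule 2(1)) (use 2 in auto)
  have "bas (w, pw ((x, True) # xs)) - EE2 w ((x, True) # xs) =
     (bas (w, x * pw xs) - bas (w, x) - bas (w, pw xs)) + (bas (w, pw xs) - EE2 w xs)"
    by (simp add: fun_eq_iff sg_def)
  also have "\<dots> \<in> WW" using 2 nz ih by (intro qspan_add W_mr) auto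
  finally show ?case .
next
  case (3 x xs)
  have nz: "pw xs \<noteq> 0" using 3 pw_nz by auto
  have ih: "bas (w, pw xs) - EE2 w xs \<in> WW" by (rule 3(1)) (use 3 in auto)
  have "bas (w, pw ((x, False) # xs)) - EE2 w ((x, False) # xs) =
     (bas (w, pw xs / x) - bas (w, pw xs) + bas (w, x)) + (bas (w, pw xs) - EE2 w xs)"
    by (simp add: fun_eq_iff sg_def)
  also have "\<dots> \<in> WW" using 3 nz ih by (intro qspan_add W_div_r) auto
  finally show ?case .
qed

lemma EE_W: "(\<forall>p\<in>set xs. fst p \<noteq> 0) \<Longrightarrow> (\<forall>p\<in>set ys. fst p \<noteq> 0) \<Longrightarrow> bas (pw xs, pw ys) - EE xs ys \<in> WW"
proof (induction xs rule: pw.induct)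
  case 1 then show ?case using W_one_l[of "pw ys"] pw_nz[of ys] by (simp add: fun_eq_iff zero_fun_def)
next
  case (2 x xs)
  have nz: "pw xs \<noteq> 0" "pw ys \<noteq> 0" using 2 pw_nz by auto
  have ih: "bas (pw xs, pw ys) - EE xs ys \<in> WW" by (rule 2(1)) (use 2 in auto)
  have "bas (pw ((x, True) # xs), pw ys) - EE ((x, True) # xs) ys =
     (bas (x * pw xs, pw ys) - bas (x, pw ys) - bas (pw xs, pw ys)) + (bas (pw xs, pw ys) - EE xs ys)
     + (bas (x, pw ys) - EE2 x ys)"
    by (simp add: fun_eq_iff sg_def)
  also have "\<dots> \<in> WW" using 2 nz ih by (intro qspan_add W_ml EE2_W) auto
  finally show ?case .
next
  case (3 x xs)
  have nz: "pw xs \<noteq> 0" "pw ys \<noteq> 0" using 3 pw_nz by auto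
  have ih: "bas (pw xs, pw ys) - EE xs ys \<in> WW" by (rule 3(1)) (use 3 in auto)
  have "bas (pw ((x, False) # xs), pw ys) - EE ((x, False) # xs) ys =
     (bas (pw xs / x, pw ys) - bas (pw xs, pw ys) + bas (x, pw ys)) + (bas (pw xs, pw ys) - EE xs ys)
     - (bas (x, pw ys) - EE2 x ys)"
    by (simp add: fun_eq_iff sg_def)
  also have "\<dots> \<in> WW" by (rule qspan_diff[OF qspan_add[OF W_div_l ih] EE2_W]) (use 3 nz in auto)
  finally show ?case .
qed

lemma EE_W_sign:
  assumes "s = 1 \<or> s = -1" "t = 1 \<or> t = -1" "\<forall>p\<in>set xs. fst p \<noteq> 0" "\<forall>p\<in>set ys. fst p \<noteq> 0"
  shows "bas (s * pw xs, t * pw ys) - EE xs ys \<in> WW"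
proof -
  have nz: "pw xs \<noteq> 0" "pw ys \<noteq> 0" using assms pw_nz by auto
  have a: "bas (s * pw xs, t * pw ys) - bas (pw xs, t * pw ys) \<in> WW"
    using assms(1,2) W_neg_l[of "pw xs" "t * pw ys"] nz by (auto simp: qspan_zero)
  have b: "bas (pw xs, t * pw ys) - bas (pw xs, pw ys) \<in> WW"
    using assms(1,2) W_neg_r[of "pw ys" "pw xs"] nz by (auto simp: qspan_zero)
  have "bas (s * pw xs, t * pw ys) - EE xs ys = (bas (s * pw xs, t * pw ys) - bas (pw xs, t * pw ys))
     + (bas (pw xs, t * pw ys) - bas (pw xs, pw ys)) + (bas (pw xs, pw ys) - EE xs ys)" by simp
  also have "\<dots> \<in> WW" using a b EE_W[OF assms(3,4)] by (intro qspan_add)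
  finally show ?thesis .
qed


lemma delta_gen_Some: "x \<noteq> 0 \<Longrightarrow> 1 - x \<noteq> 0 \<Longrightarrow> delta_gen (Some x) = bas (x, 1 - x)"
  by (simp add: delta_gen_def)

lemma eq_mem: "x \<in> S \<Longrightarrow> x = y \<Longrightarrow> y \<in> S" by simp

lemma five_case_N:
  fixes a b c d e :: "'k::field"
  assumes dist: "distinct [a, b, c, d, e]"
  shows "(- delta_gen (cross_ratio (Some b) (Some c) (Some d) (Some e)) + delta_gen (cross_ratio (Some a) (Some c) (Some d) (Some e)) - delta_gen (cross_ratio (Some a) (Some b) (Some d) (Some e)) + delta_gen (cross_ratio (Some a) (Some b) (Some c) (Some e)) - delta_gen (cross_ratio (Some a) (Some b) (Some c) (Some d))) \<in> WW"
proof -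
  have nz_ab: "(a - b) \<noteq> 0" using dist by auto
  have nz_ac: "(a - c) \<noteq> 0" using dist by auto
  have nz_ad: "(a - d) \<noteq> 0" using dist by auto
  have nz_ae: "(a - e) \<noteq> 0" using dist by auto
  have nz_bc: "(b - c) \<noteq> 0" using dist by auto
  have nz_bd: "(b - d) \<noteq> 0" using dist by auto
  have nz_be: "(b - e) \<noteq> 0" using dist by auto
  have nz_cd: "(c - d) \<noteq> 0" using dist by auto
  have nz_ce: "(c - e) \<noteq> 0" using dist by auto
  have nz_de: "(d - e) \<noteq> 0" using dist by auto
  have ne_ab: "a \<noteq> b" "b \<noteq> a" using dist by auto
  have ne_ac: "a \<noteq> c" "c \<noteq> a" using dist by auto
  have ne_ad: "a \<noteq> d" "d \<noteq> a" using dist by auto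
  have ne_ae: "a \<noteq> e" "e \<noteq> a" using dist by auto
  have ne_bc: "b \<noteq> c" "c \<noteq> b" using dist by auto
  have ne_bd: "b \<noteq> d" "d \<noteq> b" using dist by auto
  have ne_be: "b \<noteq> e" "e \<noteq> b" using dist by auto
  have ne_cd: "c \<noteq> d" "d \<noteq> c" using dist by auto
  have ne_ce: "c \<noteq> e" "e \<noteq> c" using dist by auto
  have ne_de: "d \<noteq> e" "e \<noteq> d" using dist by auto
  have cr0: "cross_ratio (Some b) (Some c) (Some d) (Some e) = Some (-1 * pw [((b - c), True), ((d - e), True), ((c - d), False), ((b - e), False)])" using ne_ab ne_ac ne_ad ne_ae ne_bc ne_bd ne_be ne_cd ne_ce ne_de by (simp add: cross_ratio_def divide_simps; (simp add: algebra_simps)?)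
  have om0: "1 - -1 * pw [((b - c), True), ((d - e), True), ((c - d), False), ((b - e), False)] = 1 * pw [((b - d), True), ((c - e), True), ((c - d), False), ((b - e), False)]" using ne_ab ne_ac ne_ad ne_ae ne_bc ne_bd ne_be ne_cd ne_ce ne_de by (simp add: divide_simps; (simp add: algebra_simps)?)
  have pn0: "pw [((b - c), True), ((d - e), True), ((c - d), False), ((b - e), False)] \<noteq> 0" "pw [((b - d), True), ((c - e), True), ((c - d), False), ((b - e), False)] \<noteq> 0" using nz_ab nz_ac nz_ad nz_ae nz_bc nz_bd nz_be nz_cd nz_ce nz_de by (auto intro!: pw_nz)
  have h0: "delta_gen (cross_ratio (Some b) (Some c) (Some d) (Some e)) - EE [((b - c), True), ((d - e), True), ((c - d), False), ((b - e), False)] [((b - d), True), ((c - e), True), ((c - d), False), ((b - e), False)] \<in> WW"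
  proof -
    have "delta_gen (cross_ratio (Some b) (Some c) (Some d) (Some e)) = bas (-1 * pw [((b - c), True), ((d - e), True), ((c - d), False), ((b - e), False)], 1 * pw [((b - d), True), ((c - e), True), ((c - d), False), ((b - e), False)])"
    proof -
      have v1: "-1 * pw [((b - c), True), ((d - e), True), ((c - d), False), ((b - e), False)] \<noteq> 0" "1 - -1 * pw [((b - c), True), ((d - e), True), ((c - d), False), ((b - e), False)] \<noteq> 0" using pn0 unfolding om0 by auto
      show ?thesis unfolding cr0 delta_gen_Some[OF v1] om0 ..
    qed
    then show ?thesis using EE_W_sign[of "-1" "1" "[((b - c), True), ((d - e), True), ((c - d), False), ((b - e), False)]" "[((b - d), True), ((c - e), True), ((c - d), False), ((b - e), False)]"] nz_ab nz_ac nz_ad nz_ae nz_bc nz_bd nz_be nz_cd nz_ce nz_de by auto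
  qed
  have cr1: "cross_ratio (Some a) (Some c) (Some d) (Some e) = Some (-1 * pw [((a - c), True), ((d - e), True), ((c - d), False), ((a - e), False)])" using ne_ab ne_ac ne_ad ne_ae ne_bc ne_bd ne_be ne_cd ne_ce ne_de by (simp add: cross_ratio_def divide_simps; (simp add: algebra_simps)?)
  have om1: "1 - -1 * pw [((a - c), True), ((d - e), True), ((c - d), False), ((a - e), False)] = 1 * pw [((a - d), True), ((c - e), True), ((c - d), False), ((a - e), False)]" using ne_ab ne_ac ne_ad ne_ae ne_bc ne_bd ne_be ne_cd ne_ce ne_de by (simp add: divide_simps; (simp add: algebra_simps)?)
  have pn1: "pw [((a - c), True), ((d - e), True), ((c - d), False), ((a - e), False)] \<noteq> 0" "pw [((a - d), True), ((c - e), True), ((c - d), False), ((a - e), False)] \<noteq> 0" using nz_ab nz_ac nz_ad nz_ae nz_bc nz_bd nz_be nz_cd nz_ce nz_de by (auto intro!: pw_nz)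
  have h1: "delta_gen (cross_ratio (Some a) (Some c) (Some d) (Some e)) - EE [((a - c), True), ((d - e), True), ((c - d), False), ((a - e), False)] [((a - d), True), ((c - e), True), ((c - d), False), ((a - e), False)] \<in> WW"
  proof -
    have "delta_gen (cross_ratio (Some a) (Some c) (Some d) (Some e)) = bas (-1 * pw [((a - c), True), ((d - e), True), ((c - d), False), ((a - e), False)], 1 * pw [((a - d), True), ((c - e), True), ((c - d), False), ((a - e), False)])"
    proof -
      have v1: "-1 * pw [((a - c), True), ((d - e), True), ((c - d), False), ((a - e), False)] \<noteq> 0" "1 - -1 * pw [((a - c), True), ((d - e), True), ((c - d), False), ((a - e), False)] \<noteq> 0" using pn1 unfolding om1 by auto
      show ?thesis unfolding cr1 delta_gen_Some[OF v1] om1 ..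
    qed
    then show ?thesis using EE_W_sign[of "-1" "1" "[((a - c), True), ((d - e), True), ((c - d), False), ((a - e), False)]" "[((a - d), True), ((c - e), True), ((c - d), False), ((a - e), False)]"] nz_ab nz_ac nz_ad nz_ae nz_bc nz_bd nz_be nz_cd nz_ce nz_de by auto
  qed
  have cr2: "cross_ratio (Some a) (Some b) (Some d) (Some e) = Some (-1 * pw [((a - b), True), ((d - e), True), ((b - d), False), ((a - e), False)])" using ne_ab ne_ac ne_ad ne_ae ne_bc ne_bd ne_be ne_cd ne_ce ne_de by (simp add: cross_ratio_def divide_simps; (simp add: algebra_simps)?)
  have om2: "1 - -1 * pw [((a - b), True), ((d - e), True), ((b - d), False), ((a - e), False)] = 1 * pw [((a - d), True), ((b - e), True), ((b - d), False), ((a - e), False)]" using ne_ab ne_ac ne_ad ne_ae ne_bc ne_bd ne_be ne_cd ne_ce ne_de by (simp add: divide_simps; (simp add: algebra_simps)?)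
  have pn2: "pw [((a - b), True), ((d - e), True), ((b - d), False), ((a - e), False)] \<noteq> 0" "pw [((a - d), True), ((b - e), True), ((b - d), False), ((a - e), False)] \<noteq> 0" using nz_ab nz_ac nz_ad nz_ae nz_bc nz_bd nz_be nz_cd nz_ce nz_de by (auto intro!: pw_nz)
  have h2: "delta_gen (cross_ratio (Some a) (Some b) (Some d) (Some e)) - EE [((a - b), True), ((d - e), True), ((b - d), False), ((a - e), False)] [((a - d), True), ((b - e), True), ((b - d), False), ((a - e), False)] \<in> WW"
  proof -
    have "delta_gen (cross_ratio (Some a) (Some b) (Some d) (Some e)) = bas (-1 * pw [((a - b), True), ((d - e), True), ((b - d), False), ((a - e), False)], 1 * pw [((a - d), True), ((b - e), True), ((b - d), False), ((a - e), False)])"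
    proof -
      have v1: "-1 * pw [((a - b), True), ((d - e), True), ((b - d), False), ((a - e), False)] \<noteq> 0" "1 - -1 * pw [((a - b), True), ((d - e), True), ((b - d), False), ((a - e), False)] \<noteq> 0" using pn2 unfolding om2 by auto
      show ?thesis unfolding cr2 delta_gen_Some[OF v1] om2 ..
    qed
    then show ?thesis using EE_W_sign[of "-1" "1" "[((a - b), True), ((d - e), True), ((b - d), False), ((a - e), False)]" "[((a - d), True), ((b - e), True), ((b - d), False), ((a - e), False)]"] nz_ab nz_ac nz_ad nz_ae nz_bc nz_bd nz_be nz_cd nz_ce nz_de by auto
  qed
  have cr3: "cross_ratio (Some a) (Some b) (Some c) (Some e) = Some (-1 * pw [((a - b), True), ((c - e), True), ((b - c), False), ((a - e), False)])" using ne_ab ne_ac ne_ad ne_ae ne_bc ne_bd ne_be ne_cd ne_ce ne_de by (simp add: cross_ratio_def divide_simps; (simp add: algebra_simps)?)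
  have om3: "1 - -1 * pw [((a - b), True), ((c - e), True), ((b - c), False), ((a - e), False)] = 1 * pw [((a - c), True), ((b - e), True), ((b - c), False), ((a - e), False)]" using ne_ab ne_ac ne_ad ne_ae ne_bc ne_bd ne_be ne_cd ne_ce ne_de by (simp add: divide_simps; (simp add: algebra_simps)?)
  have pn3: "pw [((a - b), True), ((c - e), True), ((b - c), False), ((a - e), False)] \<noteq> 0" "pw [((a - c), True), ((b - e), True), ((b - c), False), ((a - e), False)] \<noteq> 0" using nz_ab nz_ac nz_ad nz_ae nz_bc nz_bd nz_be nz_cd nz_ce nz_de by (auto intro!: pw_nz)
  have h3: "delta_gen (cross_ratio (Some a) (Some b) (Some c) (Some e)) - EE [((a - b), True), ((c - e), True), ((b - c), False), ((a - e), False)] [((a - c), True), ((b - e), True), ((b - c), False), ((a - e), False)] \<in> WW"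
  proof -
    have "delta_gen (cross_ratio (Some a) (Some b) (Some c) (Some e)) = bas (-1 * pw [((a - b), True), ((c - e), True), ((b - c), False), ((a - e), False)], 1 * pw [((a - c), True), ((b - e), True), ((b - c), False), ((a - e), False)])"
    proof -
      have v1: "-1 * pw [((a - b), True), ((c - e), True), ((b - c), False), ((a - e), False)] \<noteq> 0" "1 - -1 * pw [((a - b), True), ((c - e), True), ((b - c), False), ((a - e), False)] \<noteq> 0" using pn3 unfolding om3 by auto
      show ?thesis unfolding cr3 delta_gen_Some[OF v1] om3 ..
    qed
    then show ?thesis using EE_W_sign[of "-1" "1" "[((a - b), True), ((c - e), True), ((b - c), False), ((a - e), False)]" "[((a - c), True), ((b - e), True), ((b - c), False), ((a - e), False)]"] nz_ab nz_ac nz_ad nz_ae nz_bc nz_bd nz_be nz_cd nz_ce nz_de by auto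
  qed
  have cr4: "cross_ratio (Some a) (Some b) (Some c) (Some d) = Some (-1 * pw [((a - b), True), ((c - d), True), ((b - c), False), ((a - d), False)])" using ne_ab ne_ac ne_ad ne_ae ne_bc ne_bd ne_be ne_cd ne_ce ne_de by (simp add: cross_ratio_def divide_simps; (simp add: algebra_simps)?)
  have om4: "1 - -1 * pw [((a - b), True), ((c - d), True), ((b - c), False), ((a - d), False)] = 1 * pw [((a - c), True), ((b - d), True), ((b - c), False), ((a - d), False)]" using ne_ab ne_ac ne_ad ne_ae ne_bc ne_bd ne_be ne_cd ne_ce ne_de by (simp add: divide_simps; (simp add: algebra_simps)?)
  have pn4: "pw [((a - b), True), ((c - d), True), ((b - c), False), ((a - d), False)] \<noteq> 0" "pw [((a - c), True), ((b - d), True), ((b - c), False), ((a - d), False)] \<noteq> 0" using nz_ab nz_ac nz_ad nz_ae nz_bc nz_bd nz_be nz_cd nz_ce nz_de by (auto intro!: pw_nz)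
  have h4: "delta_gen (cross_ratio (Some a) (Some b) (Some c) (Some d)) - EE [((a - b), True), ((c - d), True), ((b - c), False), ((a - d), False)] [((a - c), True), ((b - d), True), ((b - c), False), ((a - d), False)] \<in> WW"
  proof -
    have "delta_gen (cross_ratio (Some a) (Some b) (Some c) (Some d)) = bas (-1 * pw [((a - b), True), ((c - d), True), ((b - c), False), ((a - d), False)], 1 * pw [((a - c), True), ((b - d), True), ((b - c), False), ((a - d), False)])"
    proof -
      have v1: "-1 * pw [((a - b), True), ((c - d), True), ((b - c), False), ((a - d), False)] \<noteq> 0" "1 - -1 * pw [((a - b), True), ((c - d), True), ((b - c), False), ((a - d), False)] \<noteq> 0" using pn4 unfolding om4 by auto
      show ?thesis unfolding cr4 delta_gen_Some[OF v1] om4 ..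
    qed
    then show ?thesis using EE_W_sign[of "-1" "1" "[((a - b), True), ((c - d), True), ((b - c), False), ((a - d), False)]" "[((a - c), True), ((b - d), True), ((b - c), False), ((a - d), False)]"] nz_ab nz_ac nz_ad nz_ae nz_bc nz_bd nz_be nz_cd nz_ce nz_de by auto
  qed
  have an_ac_ad: "bas ((a - c), (a - d)) + bas ((a - d), (a - c)) \<in> WW" using W_anti nz_ab nz_ac nz_ad nz_ae nz_bc nz_bd nz_be nz_cd nz_ce nz_de by blast
  have an_ac_ae: "bas ((a - c), (a - e)) + bas ((a - e), (a - c)) \<in> WW" using W_anti nz_ab nz_ac nz_ad nz_ae nz_bc nz_bd nz_be nz_cd nz_ce nz_de by blast
  have an_ac_cd: "bas ((a - c), (c - d)) + bas ((c - d), (a - c)) \<in> WW" using W_anti nz_ab nz_ac nz_ad nz_ae nz_bc nz_bd nz_be nz_cd nz_ce nz_de by blast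
  have an_ac_ce: "bas ((a - c), (c - e)) + bas ((c - e), (a - c)) \<in> WW" using W_anti nz_ab nz_ac nz_ad nz_ae nz_bc nz_bd nz_be nz_cd nz_ce nz_de by blast
  have an_ad_bc: "bas ((a - d), (b - c)) + bas ((b - c), (a - d)) \<in> WW" using W_anti nz_ab nz_ac nz_ad nz_ae nz_bc nz_bd nz_be nz_cd nz_ce nz_de by blast
  have an_ad_bd: "bas ((a - d), (b - d)) + bas ((b - d), (a - d)) \<in> WW" using W_anti nz_ab nz_ac nz_ad nz_ae nz_bc nz_bd nz_be nz_cd nz_ce nz_de by blast
  have an_ae_bc: "bas ((a - e), (b - c)) + bas ((b - c), (a - e)) \<in> WW" using W_anti nz_ab nz_ac nz_ad nz_ae nz_bc nz_bd nz_be nz_cd nz_ce nz_de by blast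
  have an_ae_bd: "bas ((a - e), (b - d)) + bas ((b - d), (a - e)) \<in> WW" using W_anti nz_ab nz_ac nz_ad nz_ae nz_bc nz_bd nz_be nz_cd nz_ce nz_de by blast
  have an_ae_cd: "bas ((a - e), (c - d)) + bas ((c - d), (a - e)) \<in> WW" using W_anti nz_ab nz_ac nz_ad nz_ae nz_bc nz_bd nz_be nz_cd nz_ce nz_de by blast
  have an_ae_ce: "bas ((a - e), (c - e)) + bas ((c - e), (a - e)) \<in> WW" using W_anti nz_ab nz_ac nz_ad nz_ae nz_bc nz_bd nz_be nz_cd nz_ce nz_de by blast
  have an_bc_cd: "bas ((b - c), (c - d)) + bas ((c - d), (b - c)) \<in> WW" using W_anti nz_ab nz_ac nz_ad nz_ae nz_bc nz_bd nz_be nz_cd nz_ce nz_de by blast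
  have an_bc_ce: "bas ((b - c), (c - e)) + bas ((c - e), (b - c)) \<in> WW" using W_anti nz_ab nz_ac nz_ad nz_ae nz_bc nz_bd nz_be nz_cd nz_ce nz_de by blast
  have an_bd_be: "bas ((b - d), (b - e)) + bas ((b - e), (b - d)) \<in> WW" using W_anti nz_ab nz_ac nz_ad nz_ae nz_bc nz_bd nz_be nz_cd nz_ce nz_de by blast
  have an_be_cd: "bas ((b - e), (c - d)) + bas ((c - d), (b - e)) \<in> WW" using W_anti nz_ab nz_ac nz_ad nz_ae nz_bc nz_bd nz_be nz_cd nz_ce nz_de by blast
  have an_be_ce: "bas ((b - e), (c - e)) + bas ((c - e), (b - e)) \<in> WW" using W_anti nz_ab nz_ac nz_ad nz_ae nz_bc nz_bd nz_be nz_cd nz_ce nz_de by blast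
  have dg_ad: "bas ((a - d), (a - d)) \<in> WW" using W_diag nz_ab nz_ac nz_ad nz_ae nz_bc nz_bd nz_be nz_cd nz_ce nz_de by blast
  have dg_ae: "bas ((a - e), (a - e)) \<in> WW" using W_diag nz_ab nz_ac nz_ad nz_ae nz_bc nz_bd nz_be nz_cd nz_ce nz_de by blast
  have dg_bd: "bas ((b - d), (b - d)) \<in> WW" using W_diag nz_ab nz_ac nz_ad nz_ae nz_bc nz_bd nz_be nz_cd nz_ce nz_de by blast
  have dg_be: "bas ((b - e), (b - e)) \<in> WW" using W_diag nz_ab nz_ac nz_ad nz_ae nz_bc nz_bd nz_be nz_cd nz_ce nz_de by blast
  note f0 = qspan_scale[OF h0, of "-1"]
  note f1 = qspan_scale[OF h1, of "1"]
  note f2 = qspan_scale[OF h2, of "-1"]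
  note f3 = qspan_scale[OF h3, of "1"]
  note f4 = qspan_scale[OF h4, of "-1"]
  note f5 = qspan_scale[OF an_ac_ad, of "1"]
  note f6 = qspan_scale[OF an_ac_ae, of "-1"]
  note f7 = qspan_scale[OF an_ac_cd, of "-1"]
  note f8 = qspan_scale[OF an_ac_ce, of "1"]
  note f9 = qspan_scale[OF an_ad_bc, of "-1"]
  note f10 = qspan_scale[OF an_ad_bd, of "1"]
  note f11 = qspan_scale[OF an_ae_bc, of "1"]
  note f12 = qspan_scale[OF an_ae_bd, of "-1"]
  note f13 = qspan_scale[OF an_ae_cd, of "1"]
  note f14 = qspan_scale[OF an_ae_ce, of "-1"]
  note f15 = qspan_scale[OF an_bc_cd, of "1"]
  note f16 = qspan_scale[OF an_bc_ce, of "-1"]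
  note f17 = qspan_scale[OF an_bd_be, of "1"]
  note f18 = qspan_scale[OF an_be_cd, of "-1"]
  note f19 = qspan_scale[OF an_be_ce, of "1"]
  note f20 = qspan_scale[OF dg_ad, of "-1"]
  note f21 = qspan_scale[OF dg_ae, of "1"]
  note f22 = qspan_scale[OF dg_bd, of "-1"]
  note f23 = qspan_scale[OF dg_be, of "-1"]
  note S = qspan_add[OF qspan_add[OF qspan_add[OF qspan_add[OF qspan_add[OF qspan_add[OF qspan_add[OF qspan_add[OF qspan_add[OF qspan_add[OF qspan_add[OF qspan_add[OF qspan_add[OF qspan_add[OF qspan_add[OF qspan_add[OF qspan_add[OF qspan_add[OF qspan_add[OF qspan_add[OF qspan_add[OF qspan_add[OF qspan_add[OF f0 f1] f2] f3] f4] f5] f6] f7] f8] f9] f10] f11] f12] f13] f14] f15] f16] f17] f18] f19] f20] f21] f22] f23]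
  show ?thesis by (rule eq_mem[OF S]) (simp add: fun_eq_iff sg_def algebra_simps)
qed

lemma five_case_0:
  fixes a b c d :: "'k::field"
  assumes dist: "distinct [a, b, c, d]"
  shows "(- delta_gen (cross_ratio (Some a) (Some b) (Some c) (Some d)) + delta_gen (cross_ratio None (Some b) (Some c) (Some d)) - delta_gen (cross_ratio None (Some a) (Some c) (Some d)) + delta_gen (cross_ratio None (Some a) (Some b) (Some d)) - delta_gen (cross_ratio None (Some a) (Some b) (Some c))) \<in> WW"
proof -
  have nz_ab: "(a - b) \<noteq> 0" using dist by auto
  have nz_ac: "(a - c) \<noteq> 0" using dist by auto
  have nz_ad: "(a - d) \<noteq> 0" using dist by auto
  have nz_bc: "(b - c) \<noteq> 0" using dist by auto
  have nz_bd: "(b - d) \<noteq> 0" using dist by auto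
  have nz_cd: "(c - d) \<noteq> 0" using dist by auto
  have ne_ab: "a \<noteq> b" "b \<noteq> a" using dist by auto
  have ne_ac: "a \<noteq> c" "c \<noteq> a" using dist by auto
  have ne_ad: "a \<noteq> d" "d \<noteq> a" using dist by auto
  have ne_bc: "b \<noteq> c" "c \<noteq> b" using dist by auto
  have ne_bd: "b \<noteq> d" "d \<noteq> b" using dist by auto
  have ne_cd: "c \<noteq> d" "d \<noteq> c" using dist by auto
  have cr0: "cross_ratio (Some a) (Some b) (Some c) (Some d) = Some (-1 * pw [((a - b), True), ((c - d), True), ((b - c), False), ((a - d), False)])" using ne_ab ne_ac ne_ad ne_bc ne_bd ne_cd by (simp add: cross_ratio_def divide_simps; (simp add: algebra_simps)?)
  have om0: "1 - -1 * pw [((a - b), True), ((c - d), True), ((b - c), False), ((a - d), False)] = 1 * pw [((a - c), True), ((b - d), True), ((b - c), False), ((a - d), False)]" using ne_ab ne_ac ne_ad ne_bc ne_bd ne_cd by (simp add: divide_simps; (simp add: algebra_simps)?)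
  have pn0: "pw [((a - b), True), ((c - d), True), ((b - c), False), ((a - d), False)] \<noteq> 0" "pw [((a - c), True), ((b - d), True), ((b - c), False), ((a - d), False)] \<noteq> 0" using nz_ab nz_ac nz_ad nz_bc nz_bd nz_cd by (auto intro!: pw_nz)
  have h0: "delta_gen (cross_ratio (Some a) (Some b) (Some c) (Some d)) - EE [((a - b), True), ((c - d), True), ((b - c), False), ((a - d), False)] [((a - c), True), ((b - d), True), ((b - c), False), ((a - d), False)] \<in> WW"
  proof -
    have "delta_gen (cross_ratio (Some a) (Some b) (Some c) (Some d)) = bas (-1 * pw [((a - b), True), ((c - d), True), ((b - c), False), ((a - d), False)], 1 * pw [((a - c), True), ((b - d), True), ((b - c), False), ((a - d), False)])"
    proof -
      have v1: "-1 * pw [((a - b), True), ((c - d), True), ((b - c), False), ((a - d), False)] \<noteq> 0" "1 - -1 * pw [((a - b), True), ((c - d), True), ((b - c), False), ((a - d), False)] \<noteq> 0" using pn0 unfolding om0 by auto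
      show ?thesis unfolding cr0 delta_gen_Some[OF v1] om0 ..
    qed
    then show ?thesis using EE_W_sign[of "-1" "1" "[((a - b), True), ((c - d), True), ((b - c), False), ((a - d), False)]" "[((a - c), True), ((b - d), True), ((b - c), False), ((a - d), False)]"] nz_ab nz_ac nz_ad nz_bc nz_bd nz_cd by auto
  qed
  have cr1: "cross_ratio None (Some b) (Some c) (Some d) = Some (-1 * pw [((c - d), True), ((b - c), False)])" using ne_ab ne_ac ne_ad ne_bc ne_bd ne_cd by (simp add: cross_ratio_def divide_simps; (simp add: algebra_simps)?)
  have om1: "1 - -1 * pw [((c - d), True), ((b - c), False)] = 1 * pw [((b - d), True), ((b - c), False)]" using ne_ab ne_ac ne_ad ne_bc ne_bd ne_cd by (simp add: divide_simps; (simp add: algebra_simps)?)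
  have pn1: "pw [((c - d), True), ((b - c), False)] \<noteq> 0" "pw [((b - d), True), ((b - c), False)] \<noteq> 0" using nz_ab nz_ac nz_ad nz_bc nz_bd nz_cd by (auto intro!: pw_nz)
  have h1: "delta_gen (cross_ratio None (Some b) (Some c) (Some d)) - EE [((c - d), True), ((b - c), False)] [((b - d), True), ((b - c), False)] \<in> WW"
  proof -
    have "delta_gen (cross_ratio None (Some b) (Some c) (Some d)) = bas (-1 * pw [((c - d), True), ((b - c), False)], 1 * pw [((b - d), True), ((b - c), False)])"
    proof -
      have v1: "-1 * pw [((c - d), True), ((b - c), False)] \<noteq> 0" "1 - -1 * pw [((c - d), True), ((b - c), False)] \<noteq> 0" using pn1 unfolding om1 by auto
      show ?thesis unfolding cr1 delta_gen_Some[OF v1] om1 ..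
    qed
    then show ?thesis using EE_W_sign[of "-1" "1" "[((c - d), True), ((b - c), False)]" "[((b - d), True), ((b - c), False)]"] nz_ab nz_ac nz_ad nz_bc nz_bd nz_cd by auto
  qed
  have cr2: "cross_ratio None (Some a) (Some c) (Some d) = Some (-1 * pw [((c - d), True), ((a - c), False)])" using ne_ab ne_ac ne_ad ne_bc ne_bd ne_cd by (simp add: cross_ratio_def divide_simps; (simp add: algebra_simps)?)
  have om2: "1 - -1 * pw [((c - d), True), ((a - c), False)] = 1 * pw [((a - d), True), ((a - c), False)]" using ne_ab ne_ac ne_ad ne_bc ne_bd ne_cd by (simp add: divide_simps; (simp add: algebra_simps)?)
  have pn2: "pw [((c - d), True), ((a - c), False)] \<noteq> 0" "pw [((a - d), True), ((a - c), False)] \<noteq> 0" using nz_ab nz_ac nz_ad nz_bc nz_bd nz_cd by (auto intro!: pw_nz)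
  have h2: "delta_gen (cross_ratio None (Some a) (Some c) (Some d)) - EE [((c - d), True), ((a - c), False)] [((a - d), True), ((a - c), False)] \<in> WW"
  proof -
    have "delta_gen (cross_ratio None (Some a) (Some c) (Some d)) = bas (-1 * pw [((c - d), True), ((a - c), False)], 1 * pw [((a - d), True), ((a - c), False)])"
    proof -
      have v1: "-1 * pw [((c - d), True), ((a - c), False)] \<noteq> 0" "1 - -1 * pw [((c - d), True), ((a - c), False)] \<noteq> 0" using pn2 unfolding om2 by auto
      show ?thesis unfolding cr2 delta_gen_Some[OF v1] om2 ..
    qed
    then show ?thesis using EE_W_sign[of "-1" "1" "[((c - d), True), ((a - c), False)]" "[((a - d), True), ((a - c), False)]"] nz_ab nz_ac nz_ad nz_bc nz_bd nz_cd by auto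
  qed
  have cr3: "cross_ratio None (Some a) (Some b) (Some d) = Some (-1 * pw [((b - d), True), ((a - b), False)])" using ne_ab ne_ac ne_ad ne_bc ne_bd ne_cd by (simp add: cross_ratio_def divide_simps; (simp add: algebra_simps)?)
  have om3: "1 - -1 * pw [((b - d), True), ((a - b), False)] = 1 * pw [((a - d), True), ((a - b), False)]" using ne_ab ne_ac ne_ad ne_bc ne_bd ne_cd by (simp add: divide_simps; (simp add: algebra_simps)?)
  have pn3: "pw [((b - d), True), ((a - b), False)] \<noteq> 0" "pw [((a - d), True), ((a - b), False)] \<noteq> 0" using nz_ab nz_ac nz_ad nz_bc nz_bd nz_cd by (auto intro!: pw_nz)
  have h3: "delta_gen (cross_ratio None (Some a) (Some b) (Some d)) - EE [((b - d), True), ((a - b), False)] [((a - d), True), ((a - b), False)] \<in> WW"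
  proof -
    have "delta_gen (cross_ratio None (Some a) (Some b) (Some d)) = bas (-1 * pw [((b - d), True), ((a - b), False)], 1 * pw [((a - d), True), ((a - b), False)])"
    proof -
      have v1: "-1 * pw [((b - d), True), ((a - b), False)] \<noteq> 0" "1 - -1 * pw [((b - d), True), ((a - b), False)] \<noteq> 0" using pn3 unfolding om3 by auto
      show ?thesis unfolding cr3 delta_gen_Some[OF v1] om3 ..
    qed
    then show ?thesis using EE_W_sign[of "-1" "1" "[((b - d), True), ((a - b), False)]" "[((a - d), True), ((a - b), False)]"] nz_ab nz_ac nz_ad nz_bc nz_bd nz_cd by auto
  qed
  have cr4: "cross_ratio None (Some a) (Some b) (Some c) = Some (-1 * pw [((b - c), True), ((a - b), False)])" using ne_ab ne_ac ne_ad ne_bc ne_bd ne_cd by (simp add: cross_ratio_def divide_simps; (simp add: algebra_simps)?)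
  have om4: "1 - -1 * pw [((b - c), True), ((a - b), False)] = 1 * pw [((a - c), True), ((a - b), False)]" using ne_ab ne_ac ne_ad ne_bc ne_bd ne_cd by (simp add: divide_simps; (simp add: algebra_simps)?)
  have pn4: "pw [((b - c), True), ((a - b), False)] \<noteq> 0" "pw [((a - c), True), ((a - b), False)] \<noteq> 0" using nz_ab nz_ac nz_ad nz_bc nz_bd nz_cd by (auto intro!: pw_nz)
  have h4: "delta_gen (cross_ratio None (Some a) (Some b) (Some c)) - EE [((b - c), True), ((a - b), False)] [((a - c), True), ((a - b), False)] \<in> WW"
  proof -
    have "delta_gen (cross_ratio None (Some a) (Some b) (Some c)) = bas (-1 * pw [((b - c), True), ((a - b), False)], 1 * pw [((a - c), True), ((a - b), False)])"
    proof -
      have v1: "-1 * pw [((b - c), True), ((a - b), False)] \<noteq> 0" "1 - -1 * pw [((b - c), True), ((a - b), False)] \<noteq> 0" using pn4 unfolding om4 by auto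
      show ?thesis unfolding cr4 delta_gen_Some[OF v1] om4 ..
    qed
    then show ?thesis using EE_W_sign[of "-1" "1" "[((b - c), True), ((a - b), False)]" "[((a - c), True), ((a - b), False)]"] nz_ab nz_ac nz_ad nz_bc nz_bd nz_cd by auto
  qed
  have an_ab_bc: "bas ((a - b), (b - c)) + bas ((b - c), (a - b)) \<in> WW" using W_anti nz_ab nz_ac nz_ad nz_bc nz_bd nz_cd by blast
  have an_ab_bd: "bas ((a - b), (b - d)) + bas ((b - d), (a - b)) \<in> WW" using W_anti nz_ab nz_ac nz_ad nz_bc nz_bd nz_cd by blast
  have an_ac_ad: "bas ((a - c), (a - d)) + bas ((a - d), (a - c)) \<in> WW" using W_anti nz_ab nz_ac nz_ad nz_bc nz_bd nz_cd by blast
  have an_ad_bc: "bas ((a - d), (b - c)) + bas ((b - c), (a - d)) \<in> WW" using W_anti nz_ab nz_ac nz_ad nz_bc nz_bd nz_cd by blast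
  have an_ad_bd: "bas ((a - d), (b - d)) + bas ((b - d), (a - d)) \<in> WW" using W_anti nz_ab nz_ac nz_ad nz_bc nz_bd nz_cd by blast
  have dg_ac: "bas ((a - c), (a - c)) \<in> WW" using W_diag nz_ab nz_ac nz_ad nz_bc nz_bd nz_cd by blast
  have dg_ad: "bas ((a - d), (a - d)) \<in> WW" using W_diag nz_ab nz_ac nz_ad nz_bc nz_bd nz_cd by blast
  note f0 = qspan_scale[OF h0, of "-1"]
  note f1 = qspan_scale[OF h1, of "1"]
  note f2 = qspan_scale[OF h2, of "-1"]
  note f3 = qspan_scale[OF h3, of "1"]
  note f4 = qspan_scale[OF h4, of "-1"]
  note f5 = qspan_scale[OF an_ab_bc, of "1"]
  note f6 = qspan_scale[OF an_ab_bd, of "-1"]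
  note f7 = qspan_scale[OF an_ac_ad, of "1"]
  note f8 = qspan_scale[OF an_ad_bc, of "-1"]
  note f9 = qspan_scale[OF an_ad_bd, of "1"]
  note f10 = qspan_scale[OF dg_ac, of "-1"]
  note f11 = qspan_scale[OF dg_ad, of "-1"]
  note S = qspan_add[OF qspan_add[OF qspan_add[OF qspan_add[OF qspan_add[OF qspan_add[OF qspan_add[OF qspan_add[OF qspan_add[OF qspan_add[OF qspan_add[OF f0 f1] f2] f3] f4] f5] f6] f7] f8] f9] f10] f11]
  show ?thesis by (rule eq_mem[OF S]) (simp add: fun_eq_iff sg_def algebra_simps)
qed

lemma five_case_1:
  fixes a b c d :: "'k::field"
  assumes dist: "distinct [a, b, c, d]"
  shows "(- delta_gen (cross_ratio None (Some b) (Some c) (Some d)) + delta_gen (cross_ratio (Some a) (Some b) (Some c) (Some d)) - delta_gen (cross_ratio (Some a) None (Some c) (Some d)) + delta_gen (cross_ratio (Some a) None (Some b) (Some d)) - delta_gen (cross_ratio (Some a) None (Some b) (Some c))) \<in> WW"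
proof -
  have nz_ab: "(a - b) \<noteq> 0" using dist by auto
  have nz_ac: "(a - c) \<noteq> 0" using dist by auto
  have nz_ad: "(a - d) \<noteq> 0" using dist by auto
  have nz_bc: "(b - c) \<noteq> 0" using dist by auto
  have nz_bd: "(b - d) \<noteq> 0" using dist by auto
  have nz_cd: "(c - d) \<noteq> 0" using dist by auto
  have ne_ab: "a \<noteq> b" "b \<noteq> a" using dist by auto
  have ne_ac: "a \<noteq> c" "c \<noteq> a" using dist by auto
  have ne_ad: "a \<noteq> d" "d \<noteq> a" using dist by auto
  have ne_bc: "b \<noteq> c" "c \<noteq> b" using dist by auto
  have ne_bd: "b \<noteq> d" "d \<noteq> b" using dist by auto
  have ne_cd: "c \<noteq> d" "d \<noteq> c" using dist by auto
  have cr0: "cross_ratio None (Some b) (Some c) (Some d) = Some (-1 * pw [((c - d), True), ((b - c), False)])" using ne_ab ne_ac ne_ad ne_bc ne_bd ne_cd by (simp add: cross_ratio_def divide_simps; (simp add: algebra_simps)?)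
  have om0: "1 - -1 * pw [((c - d), True), ((b - c), False)] = 1 * pw [((b - d), True), ((b - c), False)]" using ne_ab ne_ac ne_ad ne_bc ne_bd ne_cd by (simp add: divide_simps; (simp add: algebra_simps)?)
  have pn0: "pw [((c - d), True), ((b - c), False)] \<noteq> 0" "pw [((b - d), True), ((b - c), False)] \<noteq> 0" using nz_ab nz_ac nz_ad nz_bc nz_bd nz_cd by (auto intro!: pw_nz)
  have h0: "delta_gen (cross_ratio None (Some b) (Some c) (Some d)) - EE [((c - d), True), ((b - c), False)] [((b - d), True), ((b - c), False)] \<in> WW"
  proof -
    have "delta_gen (cross_ratio None (Some b) (Some c) (Some d)) = bas (-1 * pw [((c - d), True), ((b - c), False)], 1 * pw [((b - d), True), ((b - c), False)])"
    proof -
      have v1: "-1 * pw [((c - d), True), ((b - c), False)] \<noteq> 0" "1 - -1 * pw [((c - d), True), ((b - c), False)] \<noteq> 0" using pn0 unfolding om0 by auto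
      show ?thesis unfolding cr0 delta_gen_Some[OF v1] om0 ..
    qed
    then show ?thesis using EE_W_sign[of "-1" "1" "[((c - d), True), ((b - c), False)]" "[((b - d), True), ((b - c), False)]"] nz_ab nz_ac nz_ad nz_bc nz_bd nz_cd by auto
  qed
  have cr1: "cross_ratio (Some a) (Some b) (Some c) (Some d) = Some (-1 * pw [((a - b), True), ((c - d), True), ((b - c), False), ((a - d), False)])" using ne_ab ne_ac ne_ad ne_bc ne_bd ne_cd by (simp add: cross_ratio_def divide_simps; (simp add: algebra_simps)?)
  have om1: "1 - -1 * pw [((a - b), True), ((c - d), True), ((b - c), False), ((a - d), False)] = 1 * pw [((a - c), True), ((b - d), True), ((b - c), False), ((a - d), False)]" using ne_ab ne_ac ne_ad ne_bc ne_bd ne_cd by (simp add: divide_simps; (simp add: algebra_simps)?)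
  have pn1: "pw [((a - b), True), ((c - d), True), ((b - c), False), ((a - d), False)] \<noteq> 0" "pw [((a - c), True), ((b - d), True), ((b - c), False), ((a - d), False)] \<noteq> 0" using nz_ab nz_ac nz_ad nz_bc nz_bd nz_cd by (auto intro!: pw_nz)
  have h1: "delta_gen (cross_ratio (Some a) (Some b) (Some c) (Some d)) - EE [((a - b), True), ((c - d), True), ((b - c), False), ((a - d), False)] [((a - c), True), ((b - d), True), ((b - c), False), ((a - d), False)] \<in> WW"
  proof -
    have "delta_gen (cross_ratio (Some a) (Some b) (Some c) (Some d)) = bas (-1 * pw [((a - b), True), ((c - d), True), ((b - c), False), ((a - d), False)], 1 * pw [((a - c), True), ((b - d), True), ((b - c), False), ((a - d), False)])"
    proof -
      have v1: "-1 * pw [((a - b), True), ((c - d), True), ((b - c), False), ((a - d), False)] \<noteq> 0" "1 - -1 * pw [((a - b), True), ((c - d), True), ((b - c), False), ((a - d), False)] \<noteq> 0" using pn1 unfolding om1 by auto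
      show ?thesis unfolding cr1 delta_gen_Some[OF v1] om1 ..
    qed
    then show ?thesis using EE_W_sign[of "-1" "1" "[((a - b), True), ((c - d), True), ((b - c), False), ((a - d), False)]" "[((a - c), True), ((b - d), True), ((b - c), False), ((a - d), False)]"] nz_ab nz_ac nz_ad nz_bc nz_bd nz_cd by auto
  qed
  have cr2: "cross_ratio (Some a) None (Some c) (Some d) = Some (1 * pw [((c - d), True), ((a - d), False)])" using ne_ab ne_ac ne_ad ne_bc ne_bd ne_cd by (simp add: cross_ratio_def divide_simps; (simp add: algebra_simps)?)
  have om2: "1 - 1 * pw [((c - d), True), ((a - d), False)] = 1 * pw [((a - c), True), ((a - d), False)]" using ne_ab ne_ac ne_ad ne_bc ne_bd ne_cd by (simp add: divide_simps; (simp add: algebra_simps)?)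
  have pn2: "pw [((c - d), True), ((a - d), False)] \<noteq> 0" "pw [((a - c), True), ((a - d), False)] \<noteq> 0" using nz_ab nz_ac nz_ad nz_bc nz_bd nz_cd by (auto intro!: pw_nz)
  have h2: "delta_gen (cross_ratio (Some a) None (Some c) (Some d)) - EE [((c - d), True), ((a - d), False)] [((a - c), True), ((a - d), False)] \<in> WW"
  proof -
    have "delta_gen (cross_ratio (Some a) None (Some c) (Some d)) = bas (1 * pw [((c - d), True), ((a - d), False)], 1 * pw [((a - c), True), ((a - d), False)])"
    proof -
      have v1: "1 * pw [((c - d), True), ((a - d), False)] \<noteq> 0" "1 - 1 * pw [((c - d), True), ((a - d), False)] \<noteq> 0" using pn2 unfolding om2 by auto
      show ?thesis unfolding cr2 delta_gen_Some[OF v1] om2 ..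
    qed
    then show ?thesis using EE_W_sign[of "1" "1" "[((c - d), True), ((a - d), False)]" "[((a - c), True), ((a - d), False)]"] nz_ab nz_ac nz_ad nz_bc nz_bd nz_cd by auto
  qed
  have cr3: "cross_ratio (Some a) None (Some b) (Some d) = Some (1 * pw [((b - d), True), ((a - d), False)])" using ne_ab ne_ac ne_ad ne_bc ne_bd ne_cd by (simp add: cross_ratio_def divide_simps; (simp add: algebra_simps)?)
  have om3: "1 - 1 * pw [((b - d), True), ((a - d), False)] = 1 * pw [((a - b), True), ((a - d), False)]" using ne_ab ne_ac ne_ad ne_bc ne_bd ne_cd by (simp add: divide_simps; (simp add: algebra_simps)?)
  have pn3: "pw [((b - d), True), ((a - d), False)] \<noteq> 0" "pw [((a - b), True), ((a - d), False)] \<noteq> 0" using nz_ab nz_ac nz_ad nz_bc nz_bd nz_cd by (auto intro!: pw_nz)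
  have h3: "delta_gen (cross_ratio (Some a) None (Some b) (Some d)) - EE [((b - d), True), ((a - d), False)] [((a - b), True), ((a - d), False)] \<in> WW"
  proof -
    have "delta_gen (cross_ratio (Some a) None (Some b) (Some d)) = bas (1 * pw [((b - d), True), ((a - d), False)], 1 * pw [((a - b), True), ((a - d), False)])"
    proof -
      have v1: "1 * pw [((b - d), True), ((a - d), False)] \<noteq> 0" "1 - 1 * pw [((b - d), True), ((a - d), False)] \<noteq> 0" using pn3 unfolding om3 by auto
      show ?thesis unfolding cr3 delta_gen_Some[OF v1] om3 ..
    qed
    then show ?thesis using EE_W_sign[of "1" "1" "[((b - d), True), ((a - d), False)]" "[((a - b), True), ((a - d), False)]"] nz_ab nz_ac nz_ad nz_bc nz_bd nz_cd by auto
  qed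
  have cr4: "cross_ratio (Some a) None (Some b) (Some c) = Some (1 * pw [((b - c), True), ((a - c), False)])" using ne_ab ne_ac ne_ad ne_bc ne_bd ne_cd by (simp add: cross_ratio_def divide_simps; (simp add: algebra_simps)?)
  have om4: "1 - 1 * pw [((b - c), True), ((a - c), False)] = 1 * pw [((a - b), True), ((a - c), False)]" using ne_ab ne_ac ne_ad ne_bc ne_bd ne_cd by (simp add: divide_simps; (simp add: algebra_simps)?)
  have pn4: "pw [((b - c), True), ((a - c), False)] \<noteq> 0" "pw [((a - b), True), ((a - c), False)] \<noteq> 0" using nz_ab nz_ac nz_ad nz_bc nz_bd nz_cd by (auto intro!: pw_nz)
  have h4: "delta_gen (cross_ratio (Some a) None (Some b) (Some c)) - EE [((b - c), True), ((a - c), False)] [((a - b), True), ((a - c), False)] \<in> WW"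
  proof -
    have "delta_gen (cross_ratio (Some a) None (Some b) (Some c)) = bas (1 * pw [((b - c), True), ((a - c), False)], 1 * pw [((a - b), True), ((a - c), False)])"
    proof -
      have v1: "1 * pw [((b - c), True), ((a - c), False)] \<noteq> 0" "1 - 1 * pw [((b - c), True), ((a - c), False)] \<noteq> 0" using pn4 unfolding om4 by auto
      show ?thesis unfolding cr4 delta_gen_Some[OF v1] om4 ..
    qed
    then show ?thesis using EE_W_sign[of "1" "1" "[((b - c), True), ((a - c), False)]" "[((a - b), True), ((a - c), False)]"] nz_ab nz_ac nz_ad nz_bc nz_bd nz_cd by auto
  qed
  have an_ab_ac: "bas ((a - b), (a - c)) + bas ((a - c), (a - b)) \<in> WW" using W_anti nz_ab nz_ac nz_ad nz_bc nz_bd nz_cd by blast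
  have an_ab_ad: "bas ((a - b), (a - d)) + bas ((a - d), (a - b)) \<in> WW" using W_anti nz_ab nz_ac nz_ad nz_bc nz_bd nz_cd by blast
  have an_ab_bc: "bas ((a - b), (b - c)) + bas ((b - c), (a - b)) \<in> WW" using W_anti nz_ab nz_ac nz_ad nz_bc nz_bd nz_cd by blast
  have an_ab_bd: "bas ((a - b), (b - d)) + bas ((b - d), (a - b)) \<in> WW" using W_anti nz_ab nz_ac nz_ad nz_bc nz_bd nz_cd by blast
  have an_ad_bc: "bas ((a - d), (b - c)) + bas ((b - c), (a - d)) \<in> WW" using W_anti nz_ab nz_ac nz_ad nz_bc nz_bd nz_cd by blast
  have an_ad_bd: "bas ((a - d), (b - d)) + bas ((b - d), (a - d)) \<in> WW" using W_anti nz_ab nz_ac nz_ad nz_bc nz_bd nz_cd by blast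
  have dg_ac: "bas ((a - c), (a - c)) \<in> WW" using W_diag nz_ab nz_ac nz_ad nz_bc nz_bd nz_cd by blast
  have dg_ad: "bas ((a - d), (a - d)) \<in> WW" using W_diag nz_ab nz_ac nz_ad nz_bc nz_bd nz_cd by blast
  note f0 = qspan_scale[OF h0, of "-1"]
  note f1 = qspan_scale[OF h1, of "1"]
  note f2 = qspan_scale[OF h2, of "-1"]
  note f3 = qspan_scale[OF h3, of "1"]
  note f4 = qspan_scale[OF h4, of "-1"]
  note f5 = qspan_scale[OF an_ab_ac, of "1"]
  note f6 = qspan_scale[OF an_ab_ad, of "-1"]
  note f7 = qspan_scale[OF an_ab_bc, of "-1"]
  note f8 = qspan_scale[OF an_ab_bd, of "1"]
  note f9 = qspan_scale[OF an_ad_bc, of "1"]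
  note f10 = qspan_scale[OF an_ad_bd, of "-1"]
  note f11 = qspan_scale[OF dg_ac, of "-1"]
  note f12 = qspan_scale[OF dg_ad, of "1"]
  note S = qspan_add[OF qspan_add[OF qspan_add[OF qspan_add[OF qspan_add[OF qspan_add[OF qspan_add[OF qspan_add[OF qspan_add[OF qspan_add[OF qspan_add[OF qspan_add[OF f0 f1] f2] f3] f4] f5] f6] f7] f8] f9] f10] f11] f12]
  show ?thesis by (rule eq_mem[OF S]) (simp add: fun_eq_iff sg_def algebra_simps)
qed

lemma five_case_2:
  fixes a b c d :: "'k::field"
  assumes dist: "distinct [a, b, c, d]"
  shows "(- delta_gen (cross_ratio (Some b) None (Some c) (Some d)) + delta_gen (cross_ratio (Some a) None (Some c) (Some d)) - delta_gen (cross_ratio (Some a) (Some b) (Some c) (Some d)) + delta_gen (cross_ratio (Some a) (Some b) None (Some d)) - delta_gen (cross_ratio (Some a) (Some b) None (Some c))) \<in> WW"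
proof -
  have nz_ab: "(a - b) \<noteq> 0" using dist by auto
  have nz_ac: "(a - c) \<noteq> 0" using dist by auto
  have nz_ad: "(a - d) \<noteq> 0" using dist by auto
  have nz_bc: "(b - c) \<noteq> 0" using dist by auto
  have nz_bd: "(b - d) \<noteq> 0" using dist by auto
  have nz_cd: "(c - d) \<noteq> 0" using dist by auto
  have ne_ab: "a \<noteq> b" "b \<noteq> a" using dist by auto
  have ne_ac: "a \<noteq> c" "c \<noteq> a" using dist by auto
  have ne_ad: "a \<noteq> d" "d \<noteq> a" using dist by auto
  have ne_bc: "b \<noteq> c" "c \<noteq> b" using dist by auto
  have ne_bd: "b \<noteq> d" "d \<noteq> b" using dist by auto
  have ne_cd: "c \<noteq> d" "d \<noteq> c" using dist by auto
  have cr0: "cross_ratio (Some b) None (Some c) (Some d) = Some (1 * pw [((c - d), True), ((b - d), False)])" using ne_ab ne_ac ne_ad ne_bc ne_bd ne_cd by (simp add: cross_ratio_def divide_simps; (simp add: algebra_simps)?)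
  have om0: "1 - 1 * pw [((c - d), True), ((b - d), False)] = 1 * pw [((b - c), True), ((b - d), False)]" using ne_ab ne_ac ne_ad ne_bc ne_bd ne_cd by (simp add: divide_simps; (simp add: algebra_simps)?)
  have pn0: "pw [((c - d), True), ((b - d), False)] \<noteq> 0" "pw [((b - c), True), ((b - d), False)] \<noteq> 0" using nz_ab nz_ac nz_ad nz_bc nz_bd nz_cd by (auto intro!: pw_nz)
  have h0: "delta_gen (cross_ratio (Some b) None (Some c) (Some d)) - EE [((c - d), True), ((b - d), False)] [((b - c), True), ((b - d), False)] \<in> WW"
  proof -
    have "delta_gen (cross_ratio (Some b) None (Some c) (Some d)) = bas (1 * pw [((c - d), True), ((b - d), False)], 1 * pw [((b - c), True), ((b - d), False)])"
    proof -
      have v1: "1 * pw [((c - d), True), ((b - d), False)] \<noteq> 0" "1 - 1 * pw [((c - d), True), ((b - d), False)] \<noteq> 0" using pn0 unfolding om0 by auto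
      show ?thesis unfolding cr0 delta_gen_Some[OF v1] om0 ..
    qed
    then show ?thesis using EE_W_sign[of "1" "1" "[((c - d), True), ((b - d), False)]" "[((b - c), True), ((b - d), False)]"] nz_ab nz_ac nz_ad nz_bc nz_bd nz_cd by auto
  qed
  have cr1: "cross_ratio (Some a) None (Some c) (Some d) = Some (1 * pw [((c - d), True), ((a - d), False)])" using ne_ab ne_ac ne_ad ne_bc ne_bd ne_cd by (simp add: cross_ratio_def divide_simps; (simp add: algebra_simps)?)
  have om1: "1 - 1 * pw [((c - d), True), ((a - d), False)] = 1 * pw [((a - c), True), ((a - d), False)]" using ne_ab ne_ac ne_ad ne_bc ne_bd ne_cd by (simp add: divide_simps; (simp add: algebra_simps)?)
  have pn1: "pw [((c - d), True), ((a - d), False)] \<noteq> 0" "pw [((a - c), True), ((a - d), False)] \<noteq> 0" using nz_ab nz_ac nz_ad nz_bc nz_bd nz_cd by (auto intro!: pw_nz)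
  have h1: "delta_gen (cross_ratio (Some a) None (Some c) (Some d)) - EE [((c - d), True), ((a - d), False)] [((a - c), True), ((a - d), False)] \<in> WW"
  proof -
    have "delta_gen (cross_ratio (Some a) None (Some c) (Some d)) = bas (1 * pw [((c - d), True), ((a - d), False)], 1 * pw [((a - c), True), ((a - d), False)])"
    proof -
      have v1: "1 * pw [((c - d), True), ((a - d), False)] \<noteq> 0" "1 - 1 * pw [((c - d), True), ((a - d), False)] \<noteq> 0" using pn1 unfolding om1 by auto
      show ?thesis unfolding cr1 delta_gen_Some[OF v1] om1 ..
    qed
    then show ?thesis using EE_W_sign[of "1" "1" "[((c - d), True), ((a - d), False)]" "[((a - c), True), ((a - d), False)]"] nz_ab nz_ac nz_ad nz_bc nz_bd nz_cd by auto
  qed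
  have cr2: "cross_ratio (Some a) (Some b) (Some c) (Some d) = Some (-1 * pw [((a - b), True), ((c - d), True), ((b - c), False), ((a - d), False)])" using ne_ab ne_ac ne_ad ne_bc ne_bd ne_cd by (simp add: cross_ratio_def divide_simps; (simp add: algebra_simps)?)
  have om2: "1 - -1 * pw [((a - b), True), ((c - d), True), ((b - c), False), ((a - d), False)] = 1 * pw [((a - c), True), ((b - d), True), ((b - c), False), ((a - d), False)]" using ne_ab ne_ac ne_ad ne_bc ne_bd ne_cd by (simp add: divide_simps; (simp add: algebra_simps)?)
  have pn2: "pw [((a - b), True), ((c - d), True), ((b - c), False), ((a - d), False)] \<noteq> 0" "pw [((a - c), True), ((b - d), True), ((b - c), False), ((a - d), False)] \<noteq> 0" using nz_ab nz_ac nz_ad nz_bc nz_bd nz_cd by (auto intro!: pw_nz)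
  have h2: "delta_gen (cross_ratio (Some a) (Some b) (Some c) (Some d)) - EE [((a - b), True), ((c - d), True), ((b - c), False), ((a - d), False)] [((a - c), True), ((b - d), True), ((b - c), False), ((a - d), False)] \<in> WW"
  proof -
    have "delta_gen (cross_ratio (Some a) (Some b) (Some c) (Some d)) = bas (-1 * pw [((a - b), True), ((c - d), True), ((b - c), False), ((a - d), False)], 1 * pw [((a - c), True), ((b - d), True), ((b - c), False), ((a - d), False)])"
    proof -
      have v1: "-1 * pw [((a - b), True), ((c - d), True), ((b - c), False), ((a - d), False)] \<noteq> 0" "1 - -1 * pw [((a - b), True), ((c - d), True), ((b - c), False), ((a - d), False)] \<noteq> 0" using pn2 unfolding om2 by auto
      show ?thesis unfolding cr2 delta_gen_Some[OF v1] om2 ..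
    qed
    then show ?thesis using EE_W_sign[of "-1" "1" "[((a - b), True), ((c - d), True), ((b - c), False), ((a - d), False)]" "[((a - c), True), ((b - d), True), ((b - c), False), ((a - d), False)]"] nz_ab nz_ac nz_ad nz_bc nz_bd nz_cd by auto
  qed
  have cr3: "cross_ratio (Some a) (Some b) None (Some d) = Some (1 * pw [((a - b), True), ((a - d), False)])" using ne_ab ne_ac ne_ad ne_bc ne_bd ne_cd by (simp add: cross_ratio_def divide_simps; (simp add: algebra_simps)?)
  have om3: "1 - 1 * pw [((a - b), True), ((a - d), False)] = 1 * pw [((b - d), True), ((a - d), False)]" using ne_ab ne_ac ne_ad ne_bc ne_bd ne_cd by (simp add: divide_simps; (simp add: algebra_simps)?)
  have pn3: "pw [((a - b), True), ((a - d), False)] \<noteq> 0" "pw [((b - d), True), ((a - d), False)] \<noteq> 0" using nz_ab nz_ac nz_ad nz_bc nz_bd nz_cd by (auto intro!: pw_nz)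
  have h3: "delta_gen (cross_ratio (Some a) (Some b) None (Some d)) - EE [((a - b), True), ((a - d), False)] [((b - d), True), ((a - d), False)] \<in> WW"
  proof -
    have "delta_gen (cross_ratio (Some a) (Some b) None (Some d)) = bas (1 * pw [((a - b), True), ((a - d), False)], 1 * pw [((b - d), True), ((a - d), False)])"
    proof -
      have v1: "1 * pw [((a - b), True), ((a - d), False)] \<noteq> 0" "1 - 1 * pw [((a - b), True), ((a - d), False)] \<noteq> 0" using pn3 unfolding om3 by auto
      show ?thesis unfolding cr3 delta_gen_Some[OF v1] om3 ..
    qed
    then show ?thesis using EE_W_sign[of "1" "1" "[((a - b), True), ((a - d), False)]" "[((b - d), True), ((a - d), False)]"] nz_ab nz_ac nz_ad nz_bc nz_bd nz_cd by auto
  qed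
  have cr4: "cross_ratio (Some a) (Some b) None (Some c) = Some (1 * pw [((a - b), True), ((a - c), False)])" using ne_ab ne_ac ne_ad ne_bc ne_bd ne_cd by (simp add: cross_ratio_def divide_simps; (simp add: algebra_simps)?)
  have om4: "1 - 1 * pw [((a - b), True), ((a - c), False)] = 1 * pw [((b - c), True), ((a - c), False)]" using ne_ab ne_ac ne_ad ne_bc ne_bd ne_cd by (simp add: divide_simps; (simp add: algebra_simps)?)
  have pn4: "pw [((a - b), True), ((a - c), False)] \<noteq> 0" "pw [((b - c), True), ((a - c), False)] \<noteq> 0" using nz_ab nz_ac nz_ad nz_bc nz_bd nz_cd by (auto intro!: pw_nz)
  have h4: "delta_gen (cross_ratio (Some a) (Some b) None (Some c)) - EE [((a - b), True), ((a - c), False)] [((b - c), True), ((a - c), False)] \<in> WW"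
  proof -
    have "delta_gen (cross_ratio (Some a) (Some b) None (Some c)) = bas (1 * pw [((a - b), True), ((a - c), False)], 1 * pw [((b - c), True), ((a - c), False)])"
    proof -
      have v1: "1 * pw [((a - b), True), ((a - c), False)] \<noteq> 0" "1 - 1 * pw [((a - b), True), ((a - c), False)] \<noteq> 0" using pn4 unfolding om4 by auto
      show ?thesis unfolding cr4 delta_gen_Some[OF v1] om4 ..
    qed
    then show ?thesis using EE_W_sign[of "1" "1" "[((a - b), True), ((a - c), False)]" "[((b - c), True), ((a - c), False)]"] nz_ab nz_ac nz_ad nz_bc nz_bd nz_cd by auto
  qed
  have an_ac_bc: "bas ((a - c), (b - c)) + bas ((b - c), (a - c)) \<in> WW" using W_anti nz_ab nz_ac nz_ad nz_bc nz_bd nz_cd by blast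
  have an_ad_bc: "bas ((a - d), (b - c)) + bas ((b - c), (a - d)) \<in> WW" using W_anti nz_ab nz_ac nz_ad nz_bc nz_bd nz_cd by blast
  have an_bc_bd: "bas ((b - c), (b - d)) + bas ((b - d), (b - c)) \<in> WW" using W_anti nz_ab nz_ac nz_ad nz_bc nz_bd nz_cd by blast
  have dg_ac: "bas ((a - c), (a - c)) \<in> WW" using W_diag nz_ab nz_ac nz_ad nz_bc nz_bd nz_cd by blast
  have dg_ad: "bas ((a - d), (a - d)) \<in> WW" using W_diag nz_ab nz_ac nz_ad nz_bc nz_bd nz_cd by blast
  have dg_bc: "bas ((b - c), (b - c)) \<in> WW" using W_diag nz_ab nz_ac nz_ad nz_bc nz_bd nz_cd by blast
  have dg_bd: "bas ((b - d), (b - d)) \<in> WW" using W_diag nz_ab nz_ac nz_ad nz_bc nz_bd nz_cd by blast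
  note f0 = qspan_scale[OF h0, of "-1"]
  note f1 = qspan_scale[OF h1, of "1"]
  note f2 = qspan_scale[OF h2, of "-1"]
  note f3 = qspan_scale[OF h3, of "1"]
  note f4 = qspan_scale[OF h4, of "-1"]
  note f5 = qspan_scale[OF an_ac_bc, of "1"]
  note f6 = qspan_scale[OF an_ad_bc, of "-1"]
  note f7 = qspan_scale[OF an_bc_bd, of "1"]
  note f8 = qspan_scale[OF dg_ac, of "-1"]
  note f9 = qspan_scale[OF dg_ad, of "1"]
  note f10 = qspan_scale[OF dg_bc, of "-1"]
  note f11 = qspan_scale[OF dg_bd, of "-1"]
  note S = qspan_add[OF qspan_add[OF qspan_add[OF qspan_add[OF qspan_add[OF qspan_add[OF qspan_add[OF qspan_add[OF qspan_add[OF qspan_add[OF qspan_add[OF f0 f1] f2] f3] f4] f5] f6] f7] f8] f9] f10] f11]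
  show ?thesis by (rule eq_mem[OF S]) (simp add: fun_eq_iff sg_def algebra_simps)
qed

lemma five_case_3:
  fixes a b c d :: "'k::field"
  assumes dist: "distinct [a, b, c, d]"
  shows "(- delta_gen (cross_ratio (Some b) (Some c) None (Some d)) + delta_gen (cross_ratio (Some a) (Some c) None (Some d)) - delta_gen (cross_ratio (Some a) (Some b) None (Some d)) + delta_gen (cross_ratio (Some a) (Some b) (Some c) (Some d)) - delta_gen (cross_ratio (Some a) (Some b) (Some c) None)) \<in> WW"
proof -
  have nz_ab: "(a - b) \<noteq> 0" using dist by auto
  have nz_ac: "(a - c) \<noteq> 0" using dist by auto
  have nz_ad: "(a - d) \<noteq> 0" using dist by auto
  have nz_bc: "(b - c) \<noteq> 0" using dist by auto
  have nz_bd: "(b - d) \<noteq> 0" using dist by auto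
  have nz_cd: "(c - d) \<noteq> 0" using dist by auto
  have ne_ab: "a \<noteq> b" "b \<noteq> a" using dist by auto
  have ne_ac: "a \<noteq> c" "c \<noteq> a" using dist by auto
  have ne_ad: "a \<noteq> d" "d \<noteq> a" using dist by auto
  have ne_bc: "b \<noteq> c" "c \<noteq> b" using dist by auto
  have ne_bd: "b \<noteq> d" "d \<noteq> b" using dist by auto
  have ne_cd: "c \<noteq> d" "d \<noteq> c" using dist by auto
  have cr0: "cross_ratio (Some b) (Some c) None (Some d) = Some (1 * pw [((b - c), True), ((b - d), False)])" using ne_ab ne_ac ne_ad ne_bc ne_bd ne_cd by (simp add: cross_ratio_def divide_simps; (simp add: algebra_simps)?)
  have om0: "1 - 1 * pw [((b - c), True), ((b - d), False)] = 1 * pw [((c - d), True), ((b - d), False)]" using ne_ab ne_ac ne_ad ne_bc ne_bd ne_cd by (simp add: divide_simps; (simp add: algebra_simps)?)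
  have pn0: "pw [((b - c), True), ((b - d), False)] \<noteq> 0" "pw [((c - d), True), ((b - d), False)] \<noteq> 0" using nz_ab nz_ac nz_ad nz_bc nz_bd nz_cd by (auto intro!: pw_nz)
  have h0: "delta_gen (cross_ratio (Some b) (Some c) None (Some d)) - EE [((b - c), True), ((b - d), False)] [((c - d), True), ((b - d), False)] \<in> WW"
  proof -
    have "delta_gen (cross_ratio (Some b) (Some c) None (Some d)) = bas (1 * pw [((b - c), True), ((b - d), False)], 1 * pw [((c - d), True), ((b - d), False)])"
    proof -
      have v1: "1 * pw [((b - c), True), ((b - d), False)] \<noteq> 0" "1 - 1 * pw [((b - c), True), ((b - d), False)] \<noteq> 0" using pn0 unfolding om0 by auto
      show ?thesis unfolding cr0 delta_gen_Some[OF v1] om0 ..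
    qed
    then show ?thesis using EE_W_sign[of "1" "1" "[((b - c), True), ((b - d), False)]" "[((c - d), True), ((b - d), False)]"] nz_ab nz_ac nz_ad nz_bc nz_bd nz_cd by auto
  qed
  have cr1: "cross_ratio (Some a) (Some c) None (Some d) = Some (1 * pw [((a - c), True), ((a - d), False)])" using ne_ab ne_ac ne_ad ne_bc ne_bd ne_cd by (simp add: cross_ratio_def divide_simps; (simp add: algebra_simps)?)
  have om1: "1 - 1 * pw [((a - c), True), ((a - d), False)] = 1 * pw [((c - d), True), ((a - d), False)]" using ne_ab ne_ac ne_ad ne_bc ne_bd ne_cd by (simp add: divide_simps; (simp add: algebra_simps)?)
  have pn1: "pw [((a - c), True), ((a - d), False)] \<noteq> 0" "pw [((c - d), True), ((a - d), False)] \<noteq> 0" using nz_ab nz_ac nz_ad nz_bc nz_bd nz_cd by (auto intro!: pw_nz)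
  have h1: "delta_gen (cross_ratio (Some a) (Some c) None (Some d)) - EE [((a - c), True), ((a - d), False)] [((c - d), True), ((a - d), False)] \<in> WW"
  proof -
    have "delta_gen (cross_ratio (Some a) (Some c) None (Some d)) = bas (1 * pw [((a - c), True), ((a - d), False)], 1 * pw [((c - d), True), ((a - d), False)])"
    proof -
      have v1: "1 * pw [((a - c), True), ((a - d), False)] \<noteq> 0" "1 - 1 * pw [((a - c), True), ((a - d), False)] \<noteq> 0" using pn1 unfolding om1 by auto
      show ?thesis unfolding cr1 delta_gen_Some[OF v1] om1 ..
    qed
    then show ?thesis using EE_W_sign[of "1" "1" "[((a - c), True), ((a - d), False)]" "[((c - d), True), ((a - d), False)]"] nz_ab nz_ac nz_ad nz_bc nz_bd nz_cd by auto
  qed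
  have cr2: "cross_ratio (Some a) (Some b) None (Some d) = Some (1 * pw [((a - b), True), ((a - d), False)])" using ne_ab ne_ac ne_ad ne_bc ne_bd ne_cd by (simp add: cross_ratio_def divide_simps; (simp add: algebra_simps)?)
  have om2: "1 - 1 * pw [((a - b), True), ((a - d), False)] = 1 * pw [((b - d), True), ((a - d), False)]" using ne_ab ne_ac ne_ad ne_bc ne_bd ne_cd by (simp add: divide_simps; (simp add: algebra_simps)?)
  have pn2: "pw [((a - b), True), ((a - d), False)] \<noteq> 0" "pw [((b - d), True), ((a - d), False)] \<noteq> 0" using nz_ab nz_ac nz_ad nz_bc nz_bd nz_cd by (auto intro!: pw_nz)
  have h2: "delta_gen (cross_ratio (Some a) (Some b) None (Some d)) - EE [((a - b), True), ((a - d), False)] [((b - d), True), ((a - d), False)] \<in> WW"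
  proof -
    have "delta_gen (cross_ratio (Some a) (Some b) None (Some d)) = bas (1 * pw [((a - b), True), ((a - d), False)], 1 * pw [((b - d), True), ((a - d), False)])"
    proof -
      have v1: "1 * pw [((a - b), True), ((a - d), False)] \<noteq> 0" "1 - 1 * pw [((a - b), True), ((a - d), False)] \<noteq> 0" using pn2 unfolding om2 by auto
      show ?thesis unfolding cr2 delta_gen_Some[OF v1] om2 ..
    qed
    then show ?thesis using EE_W_sign[of "1" "1" "[((a - b), True), ((a - d), False)]" "[((b - d), True), ((a - d), False)]"] nz_ab nz_ac nz_ad nz_bc nz_bd nz_cd by auto
  qed
  have cr3: "cross_ratio (Some a) (Some b) (Some c) (Some d) = Some (-1 * pw [((a - b), True), ((c - d), True), ((b - c), False), ((a - d), False)])" using ne_ab ne_ac ne_ad ne_bc ne_bd ne_cd by (simp add: cross_ratio_def divide_simps; (simp add: algebra_simps)?)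
  have om3: "1 - -1 * pw [((a - b), True), ((c - d), True), ((b - c), False), ((a - d), False)] = 1 * pw [((a - c), True), ((b - d), True), ((b - c), False), ((a - d), False)]" using ne_ab ne_ac ne_ad ne_bc ne_bd ne_cd by (simp add: divide_simps; (simp add: algebra_simps)?)
  have pn3: "pw [((a - b), True), ((c - d), True), ((b - c), False), ((a - d), False)] \<noteq> 0" "pw [((a - c), True), ((b - d), True), ((b - c), False), ((a - d), False)] \<noteq> 0" using nz_ab nz_ac nz_ad nz_bc nz_bd nz_cd by (auto intro!: pw_nz)
  have h3: "delta_gen (cross_ratio (Some a) (Some b) (Some c) (Some d)) - EE [((a - b), True), ((c - d), True), ((b - c), False), ((a - d), False)] [((a - c), True), ((b - d), True), ((b - c), False), ((a - d), False)] \<in> WW"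
  proof -
    have "delta_gen (cross_ratio (Some a) (Some b) (Some c) (Some d)) = bas (-1 * pw [((a - b), True), ((c - d), True), ((b - c), False), ((a - d), False)], 1 * pw [((a - c), True), ((b - d), True), ((b - c), False), ((a - d), False)])"
    proof -
      have v1: "-1 * pw [((a - b), True), ((c - d), True), ((b - c), False), ((a - d), False)] \<noteq> 0" "1 - -1 * pw [((a - b), True), ((c - d), True), ((b - c), False), ((a - d), False)] \<noteq> 0" using pn3 unfolding om3 by auto
      show ?thesis unfolding cr3 delta_gen_Some[OF v1] om3 ..
    qed
    then show ?thesis using EE_W_sign[of "-1" "1" "[((a - b), True), ((c - d), True), ((b - c), False), ((a - d), False)]" "[((a - c), True), ((b - d), True), ((b - c), False), ((a - d), False)]"] nz_ab nz_ac nz_ad nz_bc nz_bd nz_cd by auto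
  qed
  have cr4: "cross_ratio (Some a) (Some b) (Some c) None = Some (-1 * pw [((a - b), True), ((b - c), False)])" using ne_ab ne_ac ne_ad ne_bc ne_bd ne_cd by (simp add: cross_ratio_def divide_simps; (simp add: algebra_simps)?)
  have om4: "1 - -1 * pw [((a - b), True), ((b - c), False)] = 1 * pw [((a - c), True), ((b - c), False)]" using ne_ab ne_ac ne_ad ne_bc ne_bd ne_cd by (simp add: divide_simps; (simp add: algebra_simps)?)
  have pn4: "pw [((a - b), True), ((b - c), False)] \<noteq> 0" "pw [((a - c), True), ((b - c), False)] \<noteq> 0" using nz_ab nz_ac nz_ad nz_bc nz_bd nz_cd by (auto intro!: pw_nz)
  have h4: "delta_gen (cross_ratio (Some a) (Some b) (Some c) None) - EE [((a - b), True), ((b - c), False)] [((a - c), True), ((b - c), False)] \<in> WW"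
  proof -
    have "delta_gen (cross_ratio (Some a) (Some b) (Some c) None) = bas (-1 * pw [((a - b), True), ((b - c), False)], 1 * pw [((a - c), True), ((b - c), False)])"
    proof -
      have v1: "-1 * pw [((a - b), True), ((b - c), False)] \<noteq> 0" "1 - -1 * pw [((a - b), True), ((b - c), False)] \<noteq> 0" using pn4 unfolding om4 by auto
      show ?thesis unfolding cr4 delta_gen_Some[OF v1] om4 ..
    qed
    then show ?thesis using EE_W_sign[of "-1" "1" "[((a - b), True), ((b - c), False)]" "[((a - c), True), ((b - c), False)]"] nz_ab nz_ac nz_ad nz_bc nz_bd nz_cd by auto
  qed
  have an_ac_ad: "bas ((a - c), (a - d)) + bas ((a - d), (a - c)) \<in> WW" using W_anti nz_ab nz_ac nz_ad nz_bc nz_bd nz_cd by blast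
  have an_ac_cd: "bas ((a - c), (c - d)) + bas ((c - d), (a - c)) \<in> WW" using W_anti nz_ab nz_ac nz_ad nz_bc nz_bd nz_cd by blast
  have an_ad_bc: "bas ((a - d), (b - c)) + bas ((b - c), (a - d)) \<in> WW" using W_anti nz_ab nz_ac nz_ad nz_bc nz_bd nz_cd by blast
  have an_ad_cd: "bas ((a - d), (c - d)) + bas ((c - d), (a - d)) \<in> WW" using W_anti nz_ab nz_ac nz_ad nz_bc nz_bd nz_cd by blast
  have an_bc_cd: "bas ((b - c), (c - d)) + bas ((c - d), (b - c)) \<in> WW" using W_anti nz_ab nz_ac nz_ad nz_bc nz_bd nz_cd by blast
  have an_bd_cd: "bas ((b - d), (c - d)) + bas ((c - d), (b - d)) \<in> WW" using W_anti nz_ab nz_ac nz_ad nz_bc nz_bd nz_cd by blast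
  have dg_ad: "bas ((a - d), (a - d)) \<in> WW" using W_diag nz_ab nz_ac nz_ad nz_bc nz_bd nz_cd by blast
  have dg_bd: "bas ((b - d), (b - d)) \<in> WW" using W_diag nz_ab nz_ac nz_ad nz_bc nz_bd nz_cd by blast
  note f0 = qspan_scale[OF h0, of "-1"]
  note f1 = qspan_scale[OF h1, of "1"]
  note f2 = qspan_scale[OF h2, of "-1"]
  note f3 = qspan_scale[OF h3, of "1"]
  note f4 = qspan_scale[OF h4, of "-1"]
  note f5 = qspan_scale[OF an_ac_ad, of "-1"]
  note f6 = qspan_scale[OF an_ac_cd, of "1"]
  note f7 = qspan_scale[OF an_ad_bc, of "1"]
  note f8 = qspan_scale[OF an_ad_cd, of "-1"]
  note f9 = qspan_scale[OF an_bc_cd, of "-1"]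
  note f10 = qspan_scale[OF an_bd_cd, of "1"]
  note f11 = qspan_scale[OF dg_ad, of "1"]
  note f12 = qspan_scale[OF dg_bd, of "-1"]
  note S = qspan_add[OF qspan_add[OF qspan_add[OF qspan_add[OF qspan_add[OF qspan_add[OF qspan_add[OF qspan_add[OF qspan_add[OF qspan_add[OF qspan_add[OF qspan_add[OF f0 f1] f2] f3] f4] f5] f6] f7] f8] f9] f10] f11] f12]
  show ?thesis by (rule eq_mem[OF S]) (simp add: fun_eq_iff sg_def algebra_simps)
qed

lemma five_case_4:
  fixes a b c d :: "'k::field"
  assumes dist: "distinct [a, b, c, d]"
  shows "(- delta_gen (cross_ratio (Some b) (Some c) (Some d) None) + delta_gen (cross_ratio (Some a) (Some c) (Some d) None) - delta_gen (cross_ratio (Some a) (Some b) (Some d) None) + delta_gen (cross_ratio (Some a) (Some b) (Some c) None) - delta_gen (cross_ratio (Some a) (Some b) (Some c) (Some d))) \<in> WW"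
proof -
  have nz_ab: "(a - b) \<noteq> 0" using dist by auto
  have nz_ac: "(a - c) \<noteq> 0" using dist by auto
  have nz_ad: "(a - d) \<noteq> 0" using dist by auto
  have nz_bc: "(b - c) \<noteq> 0" using dist by auto
  have nz_bd: "(b - d) \<noteq> 0" using dist by auto
  have nz_cd: "(c - d) \<noteq> 0" using dist by auto
  have ne_ab: "a \<noteq> b" "b \<noteq> a" using dist by auto
  have ne_ac: "a \<noteq> c" "c \<noteq> a" using dist by auto
  have ne_ad: "a \<noteq> d" "d \<noteq> a" using dist by auto
  have ne_bc: "b \<noteq> c" "c \<noteq> b" using dist by auto
  have ne_bd: "b \<noteq> d" "d \<noteq> b" using dist by auto
  have ne_cd: "c \<noteq> d" "d \<noteq> c" using dist by auto
  have cr0: "cross_ratio (Some b) (Some c) (Some d) None = Some (-1 * pw [((b - c), True), ((c - d), False)])" using ne_ab ne_ac ne_ad ne_bc ne_bd ne_cd by (simp add: cross_ratio_def divide_simps; (simp add: algebra_simps)?)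
  have om0: "1 - -1 * pw [((b - c), True), ((c - d), False)] = 1 * pw [((b - d), True), ((c - d), False)]" using ne_ab ne_ac ne_ad ne_bc ne_bd ne_cd by (simp add: divide_simps; (simp add: algebra_simps)?)
  have pn0: "pw [((b - c), True), ((c - d), False)] \<noteq> 0" "pw [((b - d), True), ((c - d), False)] \<noteq> 0" using nz_ab nz_ac nz_ad nz_bc nz_bd nz_cd by (auto intro!: pw_nz)
  have h0: "delta_gen (cross_ratio (Some b) (Some c) (Some d) None) - EE [((b - c), True), ((c - d), False)] [((b - d), True), ((c - d), False)] \<in> WW"
  proof -
    have "delta_gen (cross_ratio (Some b) (Some c) (Some d) None) = bas (-1 * pw [((b - c), True), ((c - d), False)], 1 * pw [((b - d), True), ((c - d), False)])"
    proof -
      have v1: "-1 * pw [((b - c), True), ((c - d), False)] \<noteq> 0" "1 - -1 * pw [((b - c), True), ((c - d), False)] \<noteq> 0" using pn0 unfolding om0 by auto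
      show ?thesis unfolding cr0 delta_gen_Some[OF v1] om0 ..
    qed
    then show ?thesis using EE_W_sign[of "-1" "1" "[((b - c), True), ((c - d), False)]" "[((b - d), True), ((c - d), False)]"] nz_ab nz_ac nz_ad nz_bc nz_bd nz_cd by auto
  qed
  have cr1: "cross_ratio (Some a) (Some c) (Some d) None = Some (-1 * pw [((a - c), True), ((c - d), False)])" using ne_ab ne_ac ne_ad ne_bc ne_bd ne_cd by (simp add: cross_ratio_def divide_simps; (simp add: algebra_simps)?)
  have om1: "1 - -1 * pw [((a - c), True), ((c - d), False)] = 1 * pw [((a - d), True), ((c - d), False)]" using ne_ab ne_ac ne_ad ne_bc ne_bd ne_cd by (simp add: divide_simps; (simp add: algebra_simps)?)
  have pn1: "pw [((a - c), True), ((c - d), False)] \<noteq> 0" "pw [((a - d), True), ((c - d), False)] \<noteq> 0" using nz_ab nz_ac nz_ad nz_bc nz_bd nz_cd by (auto intro!: pw_nz)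
  have h1: "delta_gen (cross_ratio (Some a) (Some c) (Some d) None) - EE [((a - c), True), ((c - d), False)] [((a - d), True), ((c - d), False)] \<in> WW"
  proof -
    have "delta_gen (cross_ratio (Some a) (Some c) (Some d) None) = bas (-1 * pw [((a - c), True), ((c - d), False)], 1 * pw [((a - d), True), ((c - d), False)])"
    proof -
      have v1: "-1 * pw [((a - c), True), ((c - d), False)] \<noteq> 0" "1 - -1 * pw [((a - c), True), ((c - d), False)] \<noteq> 0" using pn1 unfolding om1 by auto
      show ?thesis unfolding cr1 delta_gen_Some[OF v1] om1 ..
    qed
    then show ?thesis using EE_W_sign[of "-1" "1" "[((a - c), True), ((c - d), False)]" "[((a - d), True), ((c - d), False)]"] nz_ab nz_ac nz_ad nz_bc nz_bd nz_cd by auto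
  qed
  have cr2: "cross_ratio (Some a) (Some b) (Some d) None = Some (-1 * pw [((a - b), True), ((b - d), False)])" using ne_ab ne_ac ne_ad ne_bc ne_bd ne_cd by (simp add: cross_ratio_def divide_simps; (simp add: algebra_simps)?)
  have om2: "1 - -1 * pw [((a - b), True), ((b - d), False)] = 1 * pw [((a - d), True), ((b - d), False)]" using ne_ab ne_ac ne_ad ne_bc ne_bd ne_cd by (simp add: divide_simps; (simp add: algebra_simps)?)
  have pn2: "pw [((a - b), True), ((b - d), False)] \<noteq> 0" "pw [((a - d), True), ((b - d), False)] \<noteq> 0" using nz_ab nz_ac nz_ad nz_bc nz_bd nz_cd by (auto intro!: pw_nz)
  have h2: "delta_gen (cross_ratio (Some a) (Some b) (Some d) None) - EE [((a - b), True), ((b - d), False)] [((a - d), True), ((b - d), False)] \<in> WW"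
  proof -
    have "delta_gen (cross_ratio (Some a) (Some b) (Some d) None) = bas (-1 * pw [((a - b), True), ((b - d), False)], 1 * pw [((a - d), True), ((b - d), False)])"
    proof -
      have v1: "-1 * pw [((a - b), True), ((b - d), False)] \<noteq> 0" "1 - -1 * pw [((a - b), True), ((b - d), False)] \<noteq> 0" using pn2 unfolding om2 by auto
      show ?thesis unfolding cr2 delta_gen_Some[OF v1] om2 ..
    qed
    then show ?thesis using EE_W_sign[of "-1" "1" "[((a - b), True), ((b - d), False)]" "[((a - d), True), ((b - d), False)]"] nz_ab nz_ac nz_ad nz_bc nz_bd nz_cd by auto
  qed
  have cr3: "cross_ratio (Some a) (Some b) (Some c) None = Some (-1 * pw [((a - b), True), ((b - c), False)])" using ne_ab ne_ac ne_ad ne_bc ne_bd ne_cd by (simp add: cross_ratio_def divide_simps; (simp add: algebra_simps)?)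
  have om3: "1 - -1 * pw [((a - b), True), ((b - c), False)] = 1 * pw [((a - c), True), ((b - c), False)]" using ne_ab ne_ac ne_ad ne_bc ne_bd ne_cd by (simp add: divide_simps; (simp add: algebra_simps)?)
  have pn3: "pw [((a - b), True), ((b - c), False)] \<noteq> 0" "pw [((a - c), True), ((b - c), False)] \<noteq> 0" using nz_ab nz_ac nz_ad nz_bc nz_bd nz_cd by (auto intro!: pw_nz)
  have h3: "delta_gen (cross_ratio (Some a) (Some b) (Some c) None) - EE [((a - b), True), ((b - c), False)] [((a - c), True), ((b - c), False)] \<in> WW"
  proof -
    have "delta_gen (cross_ratio (Some a) (Some b) (Some c) None) = bas (-1 * pw [((a - b), True), ((b - c), False)], 1 * pw [((a - c), True), ((b - c), False)])"
    proof -
      have v1: "-1 * pw [((a - b), True), ((b - c), False)] \<noteq> 0" "1 - -1 * pw [((a - b), True), ((b - c), False)] \<noteq> 0" using pn3 unfolding om3 by auto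
      show ?thesis unfolding cr3 delta_gen_Some[OF v1] om3 ..
    qed
    then show ?thesis using EE_W_sign[of "-1" "1" "[((a - b), True), ((b - c), False)]" "[((a - c), True), ((b - c), False)]"] nz_ab nz_ac nz_ad nz_bc nz_bd nz_cd by auto
  qed
  have cr4: "cross_ratio (Some a) (Some b) (Some c) (Some d) = Some (-1 * pw [((a - b), True), ((c - d), True), ((b - c), False), ((a - d), False)])" using ne_ab ne_ac ne_ad ne_bc ne_bd ne_cd by (simp add: cross_ratio_def divide_simps; (simp add: algebra_simps)?)
  have om4: "1 - -1 * pw [((a - b), True), ((c - d), True), ((b - c), False), ((a - d), False)] = 1 * pw [((a - c), True), ((b - d), True), ((b - c), False), ((a - d), False)]" using ne_ab ne_ac ne_ad ne_bc ne_bd ne_cd by (simp add: divide_simps; (simp add: algebra_simps)?)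
  have pn4: "pw [((a - b), True), ((c - d), True), ((b - c), False), ((a - d), False)] \<noteq> 0" "pw [((a - c), True), ((b - d), True), ((b - c), False), ((a - d), False)] \<noteq> 0" using nz_ab nz_ac nz_ad nz_bc nz_bd nz_cd by (auto intro!: pw_nz)
  have h4: "delta_gen (cross_ratio (Some a) (Some b) (Some c) (Some d)) - EE [((a - b), True), ((c - d), True), ((b - c), False), ((a - d), False)] [((a - c), True), ((b - d), True), ((b - c), False), ((a - d), False)] \<in> WW"
  proof -
    have "delta_gen (cross_ratio (Some a) (Some b) (Some c) (Some d)) = bas (-1 * pw [((a - b), True), ((c - d), True), ((b - c), False), ((a - d), False)], 1 * pw [((a - c), True), ((b - d), True), ((b - c), False), ((a - d), False)])"
    proof -
      have v1: "-1 * pw [((a - b), True), ((c - d), True), ((b - c), False), ((a - d), False)] \<noteq> 0" "1 - -1 * pw [((a - b), True), ((c - d), True), ((b - c), False), ((a - d), False)] \<noteq> 0" using pn4 unfolding om4 by auto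
      show ?thesis unfolding cr4 delta_gen_Some[OF v1] om4 ..
    qed
    then show ?thesis using EE_W_sign[of "-1" "1" "[((a - b), True), ((c - d), True), ((b - c), False), ((a - d), False)]" "[((a - c), True), ((b - d), True), ((b - c), False), ((a - d), False)]"] nz_ab nz_ac nz_ad nz_bc nz_bd nz_cd by auto
  qed
  have an_ac_ad: "bas ((a - c), (a - d)) + bas ((a - d), (a - c)) \<in> WW" using W_anti nz_ab nz_ac nz_ad nz_bc nz_bd nz_cd by blast
  have an_ac_cd: "bas ((a - c), (c - d)) + bas ((c - d), (a - c)) \<in> WW" using W_anti nz_ab nz_ac nz_ad nz_bc nz_bd nz_cd by blast
  have an_ad_bc: "bas ((a - d), (b - c)) + bas ((b - c), (a - d)) \<in> WW" using W_anti nz_ab nz_ac nz_ad nz_bc nz_bd nz_cd by blast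
  have an_ad_bd: "bas ((a - d), (b - d)) + bas ((b - d), (a - d)) \<in> WW" using W_anti nz_ab nz_ac nz_ad nz_bc nz_bd nz_cd by blast
  have an_bc_cd: "bas ((b - c), (c - d)) + bas ((c - d), (b - c)) \<in> WW" using W_anti nz_ab nz_ac nz_ad nz_bc nz_bd nz_cd by blast
  have dg_ad: "bas ((a - d), (a - d)) \<in> WW" using W_diag nz_ab nz_ac nz_ad nz_bc nz_bd nz_cd by blast
  have dg_bd: "bas ((b - d), (b - d)) \<in> WW" using W_diag nz_ab nz_ac nz_ad nz_bc nz_bd nz_cd by blast
  note f0 = qspan_scale[OF h0, of "-1"]
  note f1 = qspan_scale[OF h1, of "1"]
  note f2 = qspan_scale[OF h2, of "-1"]
  note f3 = qspan_scale[OF h3, of "1"]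
  note f4 = qspan_scale[OF h4, of "-1"]
  note f5 = qspan_scale[OF an_ac_ad, of "1"]
  note f6 = qspan_scale[OF an_ac_cd, of "-1"]
  note f7 = qspan_scale[OF an_ad_bc, of "-1"]
  note f8 = qspan_scale[OF an_ad_bd, of "1"]
  note f9 = qspan_scale[OF an_bc_cd, of "1"]
  note f10 = qspan_scale[OF dg_ad, of "-1"]
  note f11 = qspan_scale[OF dg_bd, of "-1"]
  note S = qspan_add[OF qspan_add[OF qspan_add[OF qspan_add[OF qspan_add[OF qspan_add[OF qspan_add[OF qspan_add[OF qspan_add[OF qspan_add[OF qspan_add[OF f0 f1] f2] f3] f4] f5] f6] f7] f8] f9] f10] f11]
  show ?thesis by (rule eq_mem[OF S]) (simp add: fun_eq_iff sg_def algebra_simps)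
qed


lemma delta2_five:
  "delta2 (five_term x1 x2 x3 x4 x5) =
    - delta_gen (cross_ratio x2 x3 x4 x5) + delta_gen (cross_ratio x1 x3 x4 x5)
    - delta_gen (cross_ratio x1 x2 x4 x5) + delta_gen (cross_ratio x1 x2 x3 x5)
    - delta_gen (cross_ratio x1 x2 x3 x4)"
proof -
  have e: "five_term x1 x2 x3 x4 x5 = - bas (cross_ratio x2 x3 x4 x5) + bas (cross_ratio x1 x3 x4 x5)
    - bas (cross_ratio x1 x2 x4 x5) + bas (cross_ratio x1 x2 x3 x5) - bas (cross_ratio x1 x2 x3 x4)"
    by (simp add: five_term_def fun_eq_iff)
  show ?thesis unfolding e delta2_lin
    by (simp add: lin_ext_add lin_ext_diff lin_ext_neg lin_ext_bas fin_supp_bas fin_supp_add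
        fin_supp_diff fin_supp_neg del: fun_diff_def)
qed

lemma w_N: "distinct [(Some a), (Some b), (Some c), (Some d), (Some e)] \<Longrightarrow> delta2 (five_term (Some a) (Some b) (Some c) (Some d) (Some e)) \<in> WW"
  unfolding delta2_five by (rule five_case_N) auto

lemma w_0: "distinct [None, (Some a), (Some b), (Some c), (Some d)] \<Longrightarrow> delta2 (five_term None (Some a) (Some b) (Some c) (Some d)) \<in> WW"
  unfolding delta2_five by (rule five_case_0) auto

lemma w_1: "distinct [(Some a), None, (Some b), (Some c), (Some d)] \<Longrightarrow> delta2 (five_term (Some a) None (Some b) (Some c) (Some d)) \<in> WW"
  unfolding delta2_five by (rule five_case_1) auto

lemma w_2: "distinct [(Some a), (Some b), None, (Some c), (Some d)] \<Longrightarrow> delta2 (five_term (Some a) (Some b) None (Some c) (Some d)) \<in> WW"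
  unfolding delta2_five by (rule five_case_2) auto

lemma w_3: "distinct [(Some a), (Some b), (Some c), None, (Some d)] \<Longrightarrow> delta2 (five_term (Some a) (Some b) (Some c) None (Some d)) \<in> WW"
  unfolding delta2_five by (rule five_case_3) auto

lemma w_4: "distinct [(Some a), (Some b), (Some c), (Some d), None] \<Longrightarrow> delta2 (five_term (Some a) (Some b) (Some c) (Some d) None) \<in> WW"
  unfolding delta2_five by (rule five_case_4) auto

lemma five_W:
  fixes x1 x2 x3 x4 x5 :: "'k::field option"
  assumes "distinct [x1, x2, x3, x4, x5]"
  shows "delta2 (five_term x1 x2 x3 x4 x5) \<in> WW"
  using assms
  apply (cases x1; cases x2; cases x3; cases x4; cases x5; simp)
  by (rule w_N w_0 w_1 w_2 w_3 w_4; simp)+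


locale fctx =
  fixes f :: "'a::field poly"
  assumes irr: "irreducible f" and degf: "degree f \<ge> 1"
begin

lemma fprime: "prime_elem f" using irr by (rule field_poly_irreducible_imp_prime)
lemma fnz: "f \<noteq> 0" using degf by auto

lemma f_dvd_mult: "f dvd a * b \<longleftrightarrow> f dvd a \<or> f dvd b"
  using fprime by (rule prime_elem_dvd_mult_iff)

lemma pow_dvd_bound: "p \<noteq> 0 \<Longrightarrow> f ^ k dvd p \<Longrightarrow> k \<le> degree p"
proof -
  assume p: "p \<noteq> 0" and d: "f ^ k dvd p"
  have "degree (f ^ k) \<le> degree p" using dvd_imp_degree_le[OF d p] .
  moreover have "degree (f ^ k) = k * degree f" by (simp add: degree_power_eq fnz)
  moreover have "k \<le> k * degree f" using degf by simp
  ultimately show ?thesis by linarith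
qed

definition vp :: "'a poly \<Rightarrow> nat" where "vp p = (GREATEST k. f ^ k dvd p)"
definition up :: "'a poly \<Rightarrow> 'a poly" where "up p = p div f ^ vp p"

lemma vp_dvd: "p \<noteq> 0 \<Longrightarrow> f ^ vp p dvd p"
  unfolding vp_def by (rule GreatestI_nat[of _ 0 "degree p"]) (auto intro: pow_dvd_bound)

lemma vp_max: "p \<noteq> 0 \<Longrightarrow> f ^ k dvd p \<Longrightarrow> k \<le> vp p"
  unfolding vp_def by (rule Greatest_le_nat[of _ _ "degree p"]) (auto intro: pow_dvd_bound)

lemma up_eq: "p \<noteq> 0 \<Longrightarrow> p = f ^ vp p * up p"
  unfolding up_def using vp_dvd by simp

lemma up_ndvd: "p \<noteq> 0 \<Longrightarrow> \<not> f dvd up p"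
proof
  assume p: "p \<noteq> 0" and d: "f dvd up p"
  then obtain r where "up p = f * r" by blast
  then have "p = f ^ Suc (vp p) * r" using up_eq[OF p] by (simp add: ac_simps)
  then have "f ^ Suc (vp p) dvd p" by (rule dvdI)
  from vp_max[OF p this] show False by simp
qed

lemma up_nz: "p \<noteq> 0 \<Longrightarrow> up p \<noteq> 0"
  using up_ndvd by fastforce

lemma vp_unique:
  assumes "p = f ^ k * q" "\<not> f dvd q"
  shows "vp p = k \<and> up p = q"
proof -
  have q: "q \<noteq> 0" using assms(2) by auto
  have p: "p \<noteq> 0" using assms(1) q fnz by simp
  have k: "k \<le> vp p" using vp_max[OF p] assms(1) by simp
  have "\<not> k < vp p"
  proof
    assume kl: "k < vp p"
    have "f ^ Suc k dvd f ^ vp p" by (rule le_imp_power_dvd) (use kl in simp)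
    then have "f ^ Suc k dvd p" using vp_dvd[OF p] by (rule dvd_trans)
    then have "f ^ k * f dvd f ^ k * q" using assms(1) by (simp only: power_Suc2)
    moreover have "f ^ k \<noteq> 0" using fnz by simp
    ultimately have "f dvd q" using dvd_times_left_cancel_iff[of "f ^ k" f q] by blast
    with assms(2) show False by simp
  qed
  then have kk: "vp p = k" using k by simp
  have "f ^ k * up p = f ^ k * q" using up_eq[OF p] assms(1) kk by metis
  moreover have "f ^ k \<noteq> 0" using fnz by simp
  ultimately have "up p = q" by (metis mult_left_cancel)
  with kk show ?thesis by blast
qed

lemma vp_mult: "p \<noteq> 0 \<Longrightarrow> q \<noteq> 0 \<Longrightarrow> vp (p * q) = vp p + vp q \<and> up (p * q) = up p * up q"
proof -
  assume p: "p \<noteq> 0" and q: "q \<noteq> 0"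
  have "p * q = (f ^ vp p * up p) * (f ^ vp q * up q)"
    using up_eq[OF p] up_eq[OF q] by (rule arg_cong2[where f="(*)"])
  also have "\<dots> = f ^ (vp p + vp q) * (up p * up q)" by (simp add: power_add ac_simps)
  finally have "p * q = f ^ (vp p + vp q) * (up p * up q)" .
  moreover have "\<not> f dvd up p * up q" using up_ndvd[OF p] up_ndvd[OF q] f_dvd_mult by simp
  ultimately show ?thesis by (rule vp_unique)
qed

lemma vp_ndvd: "\<not> f dvd p \<Longrightarrow> vp p = 0 \<and> up p = p"
  using vp_unique[of p 0 p] by simp

lemma ndvd_small: "p \<noteq> 0 \<Longrightarrow> degree p < degree f \<Longrightarrow> \<not> f dvd p"
proof
  assume "p \<noteq> 0" "degree p < degree f" "f dvd p"
  then show False using dvd_imp_degree_le[of f p] by simp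
qed

lemma vp_f: "vp f = 1 \<and> up f = 1"
proof -
  have "\<not> f dvd 1" using fprime by (rule prime_elem_not_unit)
  then show ?thesis using vp_unique[of f 1 1] by simp
qed

end


definition mo :: "('b \<Rightarrow> rat) set \<Rightarrow> ('b \<Rightarrow> rat) \<Rightarrow> ('b \<Rightarrow> rat) \<Rightarrow> bool" where
  "mo S a b \<longleftrightarrow> a - b \<in> qspan S"

lemma mo_refl: "mo S a a" by (simp add: mo_def qspan_zero)
lemma mo_sym: "mo S a b \<Longrightarrow> mo S b a"
  unfolding mo_def using qspan_neg by fastforce
lemma mo_trans[trans]: "mo S a b \<Longrightarrow> mo S b c \<Longrightarrow> mo S a c"
  unfolding mo_def using qspan_add by fastforce
lemma mo_eq_trans[trans]: "mo S a b \<Longrightarrow> b = c \<Longrightarrow> mo S a c" by simp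
lemma eq_mo_trans[trans]: "a = b \<Longrightarrow> mo S b c \<Longrightarrow> mo S a c" by simp
lemma mo_add: "mo S a b \<Longrightarrow> mo S c d \<Longrightarrow> mo S (a + c) (b + d)"
  unfolding mo_def using qspan_add by (fastforce simp: algebra_simps)
lemma mo_diff: "mo S a b \<Longrightarrow> mo S c d \<Longrightarrow> mo S (a - c) (b - d)"
  unfolding mo_def using qspan_diff by (fastforce simp: algebra_simps)
lemma mo_scale: "mo S a b \<Longrightarrow> mo S (\<lambda>z. c * a z) (\<lambda>z. c * b z)"
  unfolding mo_def using qspan_scale[of "a - b" S c] by (simp add: algebra_simps fun_diff_def)
lemma mo_zero_iff: "mo S a 0 \<longleftrightarrow> a \<in> qspan S" by (simp add: mo_def)

lemma lin_ext_qspan: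
  assumes "\<And>g. g \<in> S \<Longrightarrow> fin_supp g \<and> lin_ext h g \<in> qspan M" "z \<in> qspan S"
  shows "lin_ext h z \<in> qspan M \<and> fin_supp z"
  using assms(2)
proof (induction rule: qspan.induct)
  case zero then show ?case by (simp only: vzero_eq lin_ext_zero qspan_zero fin_supp_zero simp_thms)
next
  case (gen v) then show ?case using assms(1) by blast
next
  case (add u v)
  then have fu: "fin_supp u" "fin_supp v" "lin_ext h u \<in> qspan M" "lin_ext h v \<in> qspan M" by auto
  show ?case unfolding vadd_eq lin_ext_add[OF fu(1,2)] using qspan_add[OF fu(3,4)] fin_supp_add[OF fu(1,2)] by blast
next
  case (scale v c)
  then have fu: "fin_supp v" "lin_ext h v \<in> qspan M" by auto
  show ?case unfolding vscale_def lin_ext_scale[OF fu(1)] using qspan_scale[OF fu(2)] fin_supp_scale[OF fu(1)] by blast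
qed

context fctx begin

definition NG :: "('a poly \<Rightarrow> rat) set" where
  "NG = {bas a + bas b - bas ((a * b) mod f) | a b. a \<noteq> 0 \<and> b \<noteq> 0 \<and> degree a < degree f \<and> degree b < degree f}"

definition cls :: "'a poly \<Rightarrow> 'a poly \<Rightarrow> rat" where "cls p = bas (p mod f)"

lemma mod_nz: "\<not> f dvd a \<Longrightarrow> a mod f \<noteq> 0"
  by (simp add: mod_eq_0_iff_dvd)

lemma mod_deg: "\<not> f dvd a \<Longrightarrow> degree (a mod f) < degree f"
  using degree_mod_less'[OF fnz mod_nz] by blast

lemma cls_mult: "\<not> f dvd a \<Longrightarrow> \<not> f dvd b \<Longrightarrow> mo NG (cls a + cls b) (cls (a * b))"
proof -
  assume a: "\<not> f dvd a" and b: "\<not> f dvd b"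
  have "bas (a mod f) + bas (b mod f) - bas (((a mod f) * (b mod f)) mod f) \<in> NG"
    unfolding NG_def using mod_nz[OF a] mod_nz[OF b] mod_deg[OF a] mod_deg[OF b] by blast
  moreover have "((a mod f) * (b mod f)) mod f = (a * b) mod f" by (rule mod_mult_eq)
  ultimately show ?thesis unfolding mo_def cls_def by (auto intro: qspan_gen)
qed

lemma mod_small: "degree a < degree f \<Longrightarrow> a mod f = a"
  by (rule mod_poly_less)

lemma one_ndvd: "\<not> f dvd 1" using fprime by (rule prime_elem_not_unit)
lemma m1_ndvd: "\<not> f dvd (-1)" using one_ndvd by simp

lemma cls_1: "mo NG (cls 1) 0"
proof -
  have "mo NG (cls 1 + cls 1) (cls (1 * 1))" using cls_mult[OF one_ndvd one_ndvd] .
  then have "(cls 1 + cls 1) - cls 1 \<in> qspan NG" by (simp add: mo_def)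
  then show ?thesis by (simp add: mo_def)
qed

lemma cls_m1: "mo NG (cls (-1)) 0"
proof -
  have a: "(cls (-1) + cls (-1)) - cls 1 \<in> qspan NG" using cls_mult[OF m1_ndvd m1_ndvd] by (simp add: mo_def)
  have b: "cls 1 \<in> qspan NG" using cls_1 by (simp add: mo_def)
  have "(\<lambda>z. (1/2) * ((cls (-1) + cls (-1)) - cls 1 + cls 1) z) \<in> qspan NG"
    by (intro qspan_scale qspan_add a b)
  moreover have "(\<lambda>z. (1/2) * ((cls (-1) + cls (-1)) - cls 1 + cls 1) z) = cls (-1)"
    by (simp add: fun_eq_iff)
  ultimately show ?thesis by (simp add: mo_def)
qed

lemma fin_supp_cls: "fin_supp (cls p)" by (simp add: cls_def fin_supp_bas)

definition rep :: "'a poly fract \<Rightarrow> 'a poly \<times> 'a poly" where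
  "rep u = (SOME pq. snd pq \<noteq> 0 \<and> u = Fract (fst pq) (snd pq))"

lemma rep_ok: "u \<noteq> 0 \<Longrightarrow> fst (rep u) \<noteq> 0 \<and> snd (rep u) \<noteq> 0 \<and> u = Fract (fst (rep u)) (snd (rep u))"
proof -
  assume u: "u \<noteq> 0"
  obtain a b where ab: "u = Fract a b" "b \<noteq> 0" by (cases u) auto
  have "snd (rep u) \<noteq> 0 \<and> u = Fract (fst (rep u)) (snd (rep u))"
    unfolding rep_def by (rule someI[of _ "(a, b)"]) (use ab in simp)
  moreover have "fst (rep u) \<noteq> 0"
  proof
    assume "fst (rep u) = 0"
    then have "u = 0" using calculation eq_fract(3) Zero_fract_def by metis
    with u show False by simp
  qed
  ultimately show ?thesis by simp
qed

definition val :: "'a poly fract \<Rightarrow> int" where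
  "val u = int (vp (fst (rep u))) - int (vp (snd (rep u)))"
definition res :: "'a poly fract \<Rightarrow> 'a poly \<Rightarrow> rat" where
  "res u = cls (up (fst (rep u))) - cls (up (snd (rep u)))"

lemma vr:
  assumes u: "u = Fract p q" and p: "p \<noteq> 0" and q: "q \<noteq> 0"
  shows "val u = int (vp p) - int (vp q) \<and> mo NG (res u) (cls (up p) - cls (up q))"
proof -
  have u0: "u \<noteq> 0" using u p q by (simp add: Zero_fract_def eq_fract)
  define p0 where "p0 = fst (rep u)"
  define q0 where "q0 = snd (rep u)"
  have r: "p0 \<noteq> 0" "q0 \<noteq> 0" "u = Fract p0 q0" using rep_ok[OF u0] by (auto simp: p0_def q0_def)
  have e: "p * q0 = p0 * q" using r u q by (simp add: eq_fract)
  have m1: "vp (p * q0) = vp p + vp q0 \<and> up (p * q0) = up p * up q0" by (rule vp_mult) (use p r in auto)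
  have m2: "vp (p0 * q) = vp p0 + vp q \<and> up (p0 * q) = up p0 * up q" by (rule vp_mult) (use q r in auto)
  have v: "vp p + vp q0 = vp p0 + vp q" using m1 m2 e by simp
  have uu: "up p * up q0 = up p0 * up q" using m1 m2 e by simp
  have c1: "mo NG (cls (up p) + cls (up q0)) (cls (up p * up q0))"
    by (rule cls_mult) (use up_ndvd p r in auto)
  have c2: "mo NG (cls (up p0) + cls (up q)) (cls (up p0 * up q))"
    by (rule cls_mult) (use up_ndvd q r in auto)
  have "mo NG ((cls (up p0) + cls (up q)) - (cls (up p) + cls (up q0)))
               (cls (up p0 * up q) - cls (up p * up q0))" by (rule mo_diff[OF c2 c1])
  then have "mo NG ((cls (up p0) + cls (up q)) - (cls (up p) + cls (up q0))) 0" using uu by simp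
  then have "mo NG (cls (up p0) - cls (up q0)) (cls (up p) - cls (up q))"
    by (simp add: mo_def algebra_simps del: fun_diff_def)
  moreover have "val u = int (vp p) - int (vp q)" unfolding val_def p0_def[symmetric] q0_def[symmetric]
    using v by linarith
  ultimately show ?thesis unfolding res_def p0_def[symmetric] q0_def[symmetric] by simp
qed

lemma vp1: "vp 1 = 0 \<and> up 1 = 1" using vp_ndvd[OF one_ndvd] .

lemma val_pfr: "\<not> f dvd p \<Longrightarrow> val (pfr p) = 0 \<and> mo NG (res (pfr p)) (cls p)"
proof -
  assume pd: "\<not> f dvd p"
  then have p: "p \<noteq> 0" by auto
  have A: "val (pfr p) = int (vp p) - int (vp 1) \<and> mo NG (res (pfr p)) (cls (up p) - cls (up 1))"
    by (rule vr) (use p in \<open>auto simp: pfr_def\<close>)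
  have B: "vp p = 0 \<and> up p = p" using vp_ndvd[OF pd] .
  have "mo NG (res (pfr p)) (cls p - cls 1)" using A B vp1 by simp
  also have "mo NG (cls p - cls 1) (cls p - 0)" by (rule mo_diff[OF mo_refl cls_1])
  finally show ?thesis using A B vp1 by simp
qed

lemma val_pfr_f: "val (pfr f) = 1 \<and> mo NG (res (pfr f)) 0"
proof -
  have A: "val (pfr f) = int (vp f) - int (vp 1) \<and> mo NG (res (pfr f)) (cls (up f) - cls (up 1))"
    by (rule vr) (use fnz in \<open>auto simp: pfr_def\<close>)
  then show ?thesis using vp_f vp1 by simp
qed

lemma val_one: "val 1 = 0 \<and> mo NG (res 1) 0"
proof -
  have "\<not> f dvd 1" by (rule one_ndvd)
  from val_pfr[OF this] have "val (pfr 1) = 0 \<and> mo NG (res (pfr 1)) (cls 1)" .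
  moreover have e: "pfr 1 = 1" by (simp add: pfr_def One_fract_def)
  ultimately show ?thesis unfolding e using mo_trans[OF _ cls_1] by blast
qed

lemma val_m1: "val (-1) = 0 \<and> mo NG (res (-1)) 0"
proof -
  from val_pfr[OF m1_ndvd] have "val (pfr (-1)) = 0 \<and> mo NG (res (pfr (-1))) (cls (-1))" .
  moreover have e: "pfr (-1) = -1" by (simp add: pfr_def One_fract_def)
  ultimately show ?thesis unfolding e using mo_trans[OF _ cls_m1] by blast
qed

lemma val_mult:
  assumes u: "u \<noteq> 0" and v: "v \<noteq> 0"
  shows "val (u * v) = val u + val v \<and> mo NG (res (u * v)) (res u + res v)"
proof -
  obtain p q where pq: "u = Fract p q" "q \<noteq> 0" "p \<noteq> 0" using u by (cases u rule: Fract_cases_nonzero) auto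
  obtain p' q' where pq': "v = Fract p' q'" "q' \<noteq> 0" "p' \<noteq> 0" using v by (cases v rule: Fract_cases_nonzero) auto
  have uv: "u * v = Fract (p * p') (q * q')" using pq pq' by simp
  have A: "val u = int (vp p) - int (vp q) \<and> mo NG (res u) (cls (up p) - cls (up q))"
    by (rule vr) (use pq in auto)
  have B: "val v = int (vp p') - int (vp q') \<and> mo NG (res v) (cls (up p') - cls (up q'))"
    by (rule vr) (use pq' in auto)
  have C: "val (u * v) = int (vp (p * p')) - int (vp (q * q')) \<and> mo NG (res (u * v)) (cls (up (p * p')) - cls (up (q * q')))"
    by (rule vr[OF uv]) (use pq pq' in auto)
  have m1: "vp (p * p') = vp p + vp p' \<and> up (p * p') = up p * up p'" by (rule vp_mult) (use pq pq' in auto)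
  have m2: "vp (q * q') = vp q + vp q' \<and> up (q * q') = up q * up q'" by (rule vp_mult) (use pq pq' in auto)
  have c1: "mo NG (cls (up p) + cls (up p')) (cls (up p * up p'))"
    by (rule cls_mult) (use up_ndvd pq pq' in auto)
  have c2: "mo NG (cls (up q) + cls (up q')) (cls (up q * up q'))"
    by (rule cls_mult) (use up_ndvd pq pq' in auto)
  have "mo NG (res (u * v)) (cls (up (p * p')) - cls (up (q * q')))" using C by simp
  also have "cls (up (p * p')) - cls (up (q * q')) = cls (up p * up p') - cls (up q * up q')" using m1 m2 by simp
  also have "mo NG (cls (up p * up p') - cls (up q * up q')) ((cls (up p) + cls (up p')) - (cls (up q) + cls (up q')))"
    by (rule mo_diff[OF mo_sym[OF c1] mo_sym[OF c2]])
  also have "(cls (up p) + cls (up p')) - (cls (up q) + cls (up q')) = (cls (up p) - cls (up q)) + (cls (up p') - cls (up q'))"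
    by (simp add: algebra_simps del: fun_diff_def)
  also have "mo NG \<dots> (res u + res v)" by (rule mo_add[OF mo_sym mo_sym]) (use A B in auto)
  finally show ?thesis using A B C m1 m2 by simp
qed

lemma val_inv:
  assumes u: "u \<noteq> 0"
  shows "val (inverse u) = - val u \<and> mo NG (res (inverse u)) (- res u)"
proof -
  have iu: "inverse u \<noteq> 0" using u by simp
  have A: "val (u * inverse u) = val u + val (inverse u) \<and> mo NG (res (u * inverse u)) (res u + res (inverse u))"
    by (rule val_mult[OF u iu])
  have "u * inverse u = 1" using u by simp
  then have B: "val u + val (inverse u) = 0 \<and> mo NG (res u + res (inverse u)) 0"
    using A val_one mo_trans mo_sym by metis
  have "mo NG (res (inverse u)) ((res u + res (inverse u)) - res u)" by (simp add: mo_refl)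
  also have "mo NG \<dots> (0 - res u)" by (rule mo_diff[OF _ mo_refl]) (use B in auto)
  finally show ?thesis using B by simp
qed

end


context fctx begin

lemma S1:
  assumes u: "u \<noteq> 0" and vu: "val u > 0"
  shows "val (1 - u) = 0 \<and> mo NG (res (1 - u)) 0"
proof -
  obtain p q where pq: "u = Fract p q" "q \<noteq> 0" "p \<noteq> 0" using u by (cases u rule: Fract_cases_nonzero) auto
  have A: "val u = int (vp p) - int (vp q) \<and> mo NG (res u) (cls (up p) - cls (up q))"
    by (rule vr) (use pq in auto)
  define m where "m = vp p"
  define n where "n = vp q"
  define k where "k = m - n"
  have mn: "m = n + k" "k \<ge> 1" using A vu by (auto simp: m_def n_def k_def)
  define X where "X = up q - f ^ k * up p"
  have pe: "p = f ^ m * up p" unfolding m_def by (rule up_eq[OF pq(3)])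
  have qe: "q = f ^ n * up q" unfolding n_def by (rule up_eq[OF pq(2)])
  have qp: "q - p = f ^ n * X"
  proof -
    have "q - p = f ^ n * up q - f ^ m * up p" by (rule arg_cong2[OF qe pe])
    also have "\<dots> = f ^ n * up q - f ^ (n + k) * up p" by (simp only: mn(1))
    also have "\<dots> = f ^ n * X" by (simp add: X_def power_add algebra_simps)
    finally show ?thesis .
  qed
  have Xn: "\<not> f dvd X"
  proof
    assume "f dvd X"
    moreover have "f dvd f ^ k * up p" using mn(2) by (simp add: dvd_power)
    ultimately have "f dvd X + f ^ k * up p" by (rule dvd_add)
    then have "f dvd up q" by (simp add: X_def)
    with up_ndvd[OF pq(2)] show False by simp
  qed
  have U: "vp (q - p) = n \<and> up (q - p) = X" by (rule vp_unique[OF qp Xn])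
  have X0: "X \<noteq> 0" using Xn by auto
  have qp0: "q - p \<noteq> 0" using qp X0 fnz by simp
  have e1: "1 - u = Fract (q - p) q" using pq by (simp add: One_fract_def)
  have B: "val (1 - u) = int (vp (q - p)) - int (vp q) \<and> mo NG (res (1 - u)) (cls (up (q - p)) - cls (up q))"
    by (rule vr[OF e1 qp0 pq(2)])
  have md: "X mod f = up q mod f"
    unfolding mod_eq_dvd_iff X_def using mn(2) by (simp add: dvd_power)
  have "cls (up (q - p)) - cls (up q) = 0" using U md by (simp add: cls_def)
  then show ?thesis using B U by (simp add: n_def)
qed

lemma S2:
  assumes w: "w \<noteq> 0" and vw: "val w < 0"
  shows "val (1 - w) = val w \<and> mo NG (res (1 - w)) (res w)"
proof -
  define y where "y = inverse w"
  have y0: "y \<noteq> 0" using w by (simp add: y_def)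
  have I: "val y = - val w \<and> mo NG (res y) (- res w)" unfolding y_def by (rule val_inv[OF w])
  have C: "val (1 - y) = 0 \<and> mo NG (res (1 - y)) 0" by (rule S1[OF y0]) (use I vw in simp)
  have y1: "1 - y \<noteq> 0" using I vw val_one by auto
  have e: "1 - w = (-1) * w * (1 - y)" using w by (simp add: y_def algebra_simps)
  have M1: "val ((-1) * w) = val (-1) + val w \<and> mo NG (res ((-1) * w)) (res (-1) + res w)"
    by (rule val_mult) (use w in auto)
  have M2: "val ((-1) * w * (1 - y)) = val ((-1) * w) + val (1 - y) \<and>
      mo NG (res ((-1) * w * (1 - y))) (res ((-1) * w) + res (1 - y))"
    by (rule val_mult) (use w y1 in auto)
  have "mo NG (res (1 - w)) (res ((-1) * w) + res (1 - y))" using M2 e by simp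
  also have "mo NG \<dots> ((res (-1) + res w) + 0)" by (rule mo_add) (use M1 C in auto)
  also have "mo NG \<dots> ((0 + res w) + 0)" by (rule mo_add[OF mo_add[OF _ mo_refl] mo_refl]) (use val_m1 in auto)
  finally show ?thesis using M1 M2 e C val_m1 by simp
qed

definition Tg :: "'a poly fract \<times> 'a poly fract \<Rightarrow> 'a poly \<Rightarrow> rat" where
  "Tg uv = (\<lambda>z. of_int (val (snd uv)) * res (fst uv) z - of_int (val (fst uv)) * res (snd uv) z)"

lemma fin_supp_res: "fin_supp (res u)"
  unfolding res_def by (rule fin_supp_diff[OF fin_supp_cls fin_supp_cls])

lemma lam_diff: "(\<lambda>z. c1 * r1 z - c2 * r2 z) = (\<lambda>z. c1 * r1 z) - (\<lambda>z. c2 * r2 z)"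
  by (rule ext) (simp only: minus_apply)

lemma fin_supp_Tg: "fin_supp (Tg uv)"
  unfolding Tg_def lam_diff
  by (rule fin_supp_diff[OF fin_supp_scale[OF fin_supp_res] fin_supp_scale[OF fin_supp_res]])

lemma mo_comb: "mo S r1 s1 \<Longrightarrow> mo S r2 s2 \<Longrightarrow>
   mo S (\<lambda>z. c1 * r1 z - c2 * r2 z) (\<lambda>z. c1 * s1 z - c2 * s2 z)"
  unfolding lam_diff by (rule mo_diff[OF mo_scale mo_scale])

lemma steinberg:
  assumes x0: "x \<noteq> 0" and x1: "x \<noteq> 1"
  shows "mo NG (Tg (x, 1 - x)) 0"
proof -
  have y0: "1 - x \<noteq> 0" using x1 by simp
  define a where "a = val x"
  define b where "b = val (1 - x)"
  have T: "Tg (x, 1 - x) = (\<lambda>z. of_int b * res x z - of_int a * res (1 - x) z)"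
    by (simp add: Tg_def a_def b_def)
  consider "a > 0" | "a < 0" | "a = 0 \<and> b > 0" | "a = 0 \<and> b = 0" | "a = 0 \<and> b < 0" by linarith
  then show ?thesis
  proof cases
    case 1
    have C: "val (1 - x) = 0 \<and> mo NG (res (1 - x)) 0" using S1[OF x0] 1 by (simp add: a_def)
    have "mo NG (Tg (x, 1 - x)) (\<lambda>z. of_int b * res x z - of_int a * (0::'a poly \<Rightarrow> rat) z)"
      unfolding T by (rule mo_comb[OF mo_refl]) (use C in \<open>auto simp: zero_fun_def\<close>)
    then show ?thesis using C by (simp add: b_def zero_fun_def)
  next
    case 2
    have C: "val (1 - x) = val x \<and> mo NG (res (1 - x)) (res x)" using S2[OF x0] 2 by (simp add: a_def)
    have "mo NG (Tg (x, 1 - x)) (\<lambda>z. of_int b * res x z - of_int a * res x z)"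
      unfolding T by (rule mo_comb[OF mo_refl]) (use C in auto)
    then show ?thesis using C by (simp add: a_def b_def zero_fun_def)
  next
    case 3
    have C: "val (1 - (1 - x)) = 0 \<and> mo NG (res (1 - (1 - x))) 0" using S1[OF y0] 3 by (simp add: b_def)
    have "mo NG (Tg (x, 1 - x)) (\<lambda>z. of_int b * (0::'a poly \<Rightarrow> rat) z - of_int a * res (1 - x) z)"
      unfolding T by (rule mo_comb[OF _ mo_refl]) (use C in \<open>auto simp: zero_fun_def\<close>)
    then show ?thesis using 3 by (simp add: zero_fun_def)
  next
    case 4
    then show ?thesis unfolding T by (simp add: mo_refl zero_fun_def)
  next
    case 5
    have C: "val (1 - (1 - x)) = val (1 - x)" using S2[OF y0] 5 by (simp add: b_def)
    then have False using 5 unfolding a_def b_def by simp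
    then show ?thesis ..
  qed
qed

end


lemma lin_ext_gadd: "lin_ext (\<lambda>p. g1 p + g2 p) s = lin_ext g1 s + lin_ext g2 s"
  by (rule ext) (simp add: lin_ext_def sum.distrib algebra_simps)

lemma lin_ext_bas_id: "fin_supp s \<Longrightarrow> lin_ext bas s = s"
proof -
  assume fs: "fin_supp s"
  have "s = (\<Sum>p\<in>{p. s p \<noteq> 0}. (\<lambda>x. s p * bas p x))" by (rule fin_supp_expand[OF fs])
  also have "\<dots> = lin_ext bas s" by (rule ext) (simp add: lin_ext_def sum_apply)
  finally show ?thesis by simp
qed

lemma pfr_mult: "pfr (p * q) = pfr p * pfr q" by (simp add: pfr_def)
lemma pfr_add: "pfr (p + q) = pfr p + pfr q" by (simp add: pfr_def)
lemma pfr_minus: "pfr (- p) = - pfr p" by (simp add: pfr_def)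
lemma pfr_nz: "p \<noteq> 0 \<Longrightarrow> pfr p \<noteq> 0" by (simp add: pfr_def Zero_fract_def eq_fract)
lemma pfr_one: "pfr 1 = 1" by (simp add: pfr_def One_fract_def)

context fctx begin

abbreviation "V \<equiv> V_gens (degree f - 1)"
abbreviation "P0 \<equiv> {bas (g, h) | g h. g \<in> V \<and> h \<in> V}"
abbreviation "PV \<equiv> {bas (g, h) | g h. g \<in> Vf_gens f \<and> h \<in> Vf_gens f}"

definition LL :: "('a poly \<Rightarrow> rat) \<Rightarrow> ('a poly fract \<times> 'a poly fract \<Rightarrow> rat)" where
  "LL s = lin_ext (\<lambda>p. bas (pfr f, pfr p)) s"

lemma inV: "p \<noteq> 0 \<Longrightarrow> degree p < degree f \<Longrightarrow> pfr p \<in> V"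
  unfolding V_gens_def by auto

lemma V_cases: "g \<in> V \<Longrightarrow> \<exists>p. g = pfr p \<and> p \<noteq> 0 \<and> degree p < degree f"
  unfolding V_gens_def using degf by force

lemma small_ndvd: "p \<noteq> 0 \<Longrightarrow> degree p < degree f \<Longrightarrow> \<not> f dvd p"
  by (rule ndvd_small)

lemma Tg_P0: "g \<in> V \<Longrightarrow> h \<in> V \<Longrightarrow> Tg (g, h) = 0"
proof -
  assume "g \<in> V" "h \<in> V"
  then obtain p q where "g = pfr p" "p \<noteq> 0" "degree p < degree f" "h = pfr q" "q \<noteq> 0" "degree q < degree f"
    using V_cases by metis
  then have "val g = 0" "val h = 0" using val_pfr small_ndvd by auto
  then show ?thesis by (simp add: Tg_def zero_fun_def)
qed

lemma fin_supp_wr: "z \<in> wedge_rel \<Longrightarrow> fin_supp z"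
  unfolding wedge_rel_def vsub_eq by (auto intro!: fin_supp_diff fin_supp_bas)

lemma T_wr: "z \<in> wedge_rel \<Longrightarrow> lin_ext Tg z \<in> qspan NG"
proof -
  assume "z \<in> wedge_rel"
  then consider (A) u v w where "z = bas (u * v, w) - bas (u, w) - bas (v, w)" "u \<noteq> 0" "v \<noteq> 0" "w \<noteq> 0"
    | (B) u v w where "z = bas (u, v * w) - bas (u, v) - bas (u, w)" "u \<noteq> 0" "v \<noteq> 0" "w \<noteq> 0"
    | (C) u where "z = bas (u, u)" "u \<noteq> 0"
    unfolding wedge_rel_def vsub_eq by blast
  then show ?thesis
  proof cases
    case A
    have M: "val (u * v) = val u + val v \<and> mo NG (res (u * v)) (res u + res v)" by (rule val_mult) (use A in auto)
    have e: "lin_ext Tg z = Tg (u * v, w) - Tg (u, w) - Tg (v, w)"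
      unfolding A(1) by (simp only: lin_ext_diff fin_supp_diff fin_supp_bas lin_ext_bas)
    have R: "res (u * v) - (res u + res v) \<in> qspan NG" using M by (simp add: mo_def)
    have "lin_ext Tg z = (\<lambda>x. of_int (val w) * (res (u * v) - (res u + res v)) x)"
      unfolding e using M by (simp add: Tg_def fun_eq_iff algebra_simps)
    then show ?thesis using qspan_scale[OF R, of "of_int (val w)"] by (simp only:)
  next
    case B
    have M: "val (v * w) = val v + val w \<and> mo NG (res (v * w)) (res v + res w)" by (rule val_mult) (use B in auto)
    have e: "lin_ext Tg z = Tg (u, v * w) - Tg (u, v) - Tg (u, w)"
      unfolding B(1) by (simp only: lin_ext_diff fin_supp_diff fin_supp_bas lin_ext_bas)
    have R: "res (v * w) - (res v + res w) \<in> qspan NG" using M by (simp add: mo_def)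
    have "lin_ext Tg z = (\<lambda>x. (- of_int (val u)) * (res (v * w) - (res v + res w)) x)"
      unfolding e using M by (simp add: Tg_def fun_eq_iff algebra_simps)
    then show ?thesis using qspan_scale[OF R, of "- of_int (val u)"] by (simp only:)
  next
    case C
    have "lin_ext Tg z = 0" unfolding C(1) lin_ext_bas by (simp add: Tg_def zero_fun_def)
    then show ?thesis by (simp add: qspan_zero)
  qed
qed

lemma T_W0: "z \<in> qspan (wedge_rel \<union> P0) \<Longrightarrow> lin_ext Tg z \<in> qspan NG \<and> fin_supp z"
proof (rule lin_ext_qspan)
  fix g :: "'a poly fract \<times> 'a poly fract \<Rightarrow> rat" assume "g \<in> wedge_rel \<union> P0"
  then show "fin_supp g \<and> lin_ext Tg g \<in> qspan NG"
  proof
    assume "g \<in> wedge_rel" then show ?thesis using fin_supp_wr T_wr by blast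
  next
    assume "g \<in> P0"
    then obtain a b where ab: "g = bas (a, b)" "a \<in> V" "b \<in> V" by blast
    have "lin_ext Tg g = 0" unfolding ab(1) lin_ext_bas by (rule Tg_P0[OF ab(2,3)])
    then show ?thesis using qspan_zero fin_supp_bas ab(1) by metis
  qed
qed

lemma LL_add: "fin_supp s \<Longrightarrow> fin_supp t \<Longrightarrow> LL (s + t) = LL s + LL t"
  unfolding LL_def by (rule lin_ext_add)
lemma LL_scale: "fin_supp s \<Longrightarrow> LL (\<lambda>x. c * s x) = (\<lambda>z. c * LL s z)"
  unfolding LL_def by (rule lin_ext_scale)
lemma LL_zero: "LL 0 = 0" unfolding LL_def by (rule lin_ext_zero)
lemma LL_bas: "LL (bas p) = bas (pfr f, pfr p)" unfolding LL_def by (rule lin_ext_bas)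
lemma fin_supp_LL: "fin_supp s \<Longrightarrow> fin_supp (LL s)"
  unfolding LL_def by (rule lin_ext_fin_supp) (auto intro: fin_supp_bas)

definition good :: "('a poly \<Rightarrow> rat) \<Rightarrow> bool" where
  "good s \<longleftrightarrow> fin_supp s \<and> (\<forall>p. s p \<noteq> 0 \<longrightarrow> p \<noteq> 0 \<and> degree p < degree f)"

lemma decomp:
  assumes "z \<in> qspan (wedge_rel \<union> PV)"
  shows "\<exists>w s. z = w + LL s \<and> w \<in> qspan (wedge_rel \<union> P0) \<and> good s"
  using assms
proof (induction rule: qspan.induct)
  case zero
  have g0: "good 0" by (simp add: good_def fin_supp_zero)
  show ?case by (rule exI[of _ 0], rule exI[of _ 0])
     (simp only: vzero_eq LL_zero add_0_left qspan_zero g0 simp_thms)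
next
  case (gen v)
  then show ?case
  proof
    assume "v \<in> wedge_rel"
    then have "v \<in> qspan (wedge_rel \<union> P0)" by (intro qspan_gen UnI1)
    moreover have "v = v + LL 0" by (simp only: LL_zero add_0_right)
    moreover have "good 0" by (simp add: good_def fin_supp_zero)
    ultimately show ?thesis by blast
  next
    assume "v \<in> PV"
    then obtain g h where gh: "v = bas (g, h)" "g \<in> Vf_gens f" "h \<in> Vf_gens f" by blast
    have F: "pfr f \<noteq> 0" by (rule pfr_nz[OF fnz])
    have Vnz: "x \<noteq> 0" if "x \<in> V" for x using V_cases[OF that] pfr_nz by auto
    consider "g \<in> V" "h \<in> V" | "g = pfr f" "h \<in> V" | "g \<in> V" "h = pfr f" | "g = pfr f" "h = pfr f"
      using gh unfolding Vf_gens_def by blast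
    then show ?thesis
    proof cases
      case 1
      then have "v \<in> qspan (wedge_rel \<union> P0)" using gh by (intro qspan_gen UnI2) blast
      moreover have "v = v + LL 0" by (simp only: LL_zero add_0_right)
      moreover have "good 0" by (simp add: good_def fin_supp_zero)
      ultimately show ?thesis by blast
    next
      case 2
      obtain p where p: "h = pfr p" "p \<noteq> 0" "degree p < degree f" using V_cases[OF 2(2)] by blast
      have "v = 0 + LL (bas p)" using gh 2 p by (simp add: LL_bas)
      moreover have "good (bas p)" using p fin_supp_bas[of p] unfolding good_def bas_def by auto
      ultimately show ?thesis using qspan_zero by blast
    next
      case 3
      obtain p where p: "g = pfr p" "p \<noteq> 0" "degree p < degree f" using V_cases[OF 3(1)] by blast
      have fs: "fin_supp (bas p)" by (rule fin_supp_bas)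
      have "LL (- bas p) = - bas (pfr f, g)"
        using LL_scale[OF fs, of "-1"] p by (simp add: LL_bas fun_Compl_def)
      then have "v = (bas (g, pfr f) + bas (pfr f, g)) + LL (- bas p)" using gh 3 by simp
      moreover have "bas (g, pfr f) + bas (pfr f, g) \<in> qspan (wedge_rel \<union> P0)"
        using qspan_mono[of wedge_rel "wedge_rel \<union> P0"] W_anti[of g "pfr f"] F Vnz 3 by blast
      moreover have "good (- bas p)" using p fin_supp_neg[OF fin_supp_bas[of p]] unfolding good_def bas_def by auto
      ultimately show ?thesis by blast
    next
      case 4
      have "v \<in> qspan (wedge_rel \<union> P0)"
        using qspan_mono[of wedge_rel "wedge_rel \<union> P0"] W_diag[OF F] gh 4 by blast
      moreover have "v = v + LL 0" by (simp only: LL_zero add_0_right)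
      moreover have "good 0" by (simp add: good_def fin_supp_zero)
      ultimately show ?thesis by blast
    qed
  qed
next
  case (add u v)
  then obtain w1 s1 w2 s2 where A: "u = w1 + LL s1" "w1 \<in> qspan (wedge_rel \<union> P0)" "good s1"
    "v = w2 + LL s2" "w2 \<in> qspan (wedge_rel \<union> P0)" "good s2" by blast
  have "vadd u v = (w1 + w2) + LL (s1 + s2)"
    using A by (simp add: vadd_eq LL_add good_def algebra_simps del: fun_diff_def)
  moreover have "good (s1 + s2)"
  proof -
    have f1: "fin_supp (s1 + s2)" using A by (auto simp: good_def intro: fin_supp_add)
    have f2: "p \<noteq> 0 \<and> degree p < degree f" if "(s1 + s2) p \<noteq> 0" for p
    proof -
      have "s1 p \<noteq> 0 \<or> s2 p \<noteq> 0" using that by auto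
      then show ?thesis using A unfolding good_def by blast
    qed
    show ?thesis unfolding good_def using f1 f2 by blast
  qed
  moreover have "w1 + w2 \<in> qspan (wedge_rel \<union> P0)" using A qspan_add by blast
  ultimately show ?case by blast
next
  case (scale v c)
  then obtain w s where A: "v = w + LL s" "w \<in> qspan (wedge_rel \<union> P0)" "good s" by blast
  have "vscale c v = (\<lambda>z. c * w z) + LL (\<lambda>x. c * s x)"
    using A by (simp add: vscale_def LL_scale good_def algebra_simps fun_eq_iff)
  moreover have "good (\<lambda>x. c * s x)" using A by (auto simp: good_def fin_supp_scale)
  moreover have "(\<lambda>z. c * w z) \<in> qspan (wedge_rel \<union> P0)" using A qspan_scale by blast
  ultimately show ?case by blast
qed

end


context fctx begin

abbreviation "XG \<equiv> {bas (Some (x_f f a b)) | a b. a \<noteq> 0 \<and> b \<noteq> 0 \<and> degree a < degree f \<and> degree b < degree f}"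

lemma LL_gen: "LL (bas a + bas b - bas c) = bas (pfr f, pfr a) + bas (pfr f, pfr b) - bas (pfr f, pfr c)"
  unfolding LL_def
  by (simp only: lin_ext_diff lin_ext_add fin_supp_add fin_supp_bas lin_ext_bas)

lemma W_sub: "z \<in> WW \<Longrightarrow> z \<in> qspan (wedge_rel \<union> P0)"
  using qspan_mono[of wedge_rel "wedge_rel \<union> P0"] by blast

lemma P0_sub: "g \<in> V \<Longrightarrow> h \<in> V \<Longrightarrow> bas (g, h) \<in> qspan (wedge_rel \<union> P0)"
  by (intro qspan_gen UnI2) blast

lemma xf_key:
  assumes a: "a \<noteq> 0" "degree a < degree f" and b: "b \<noteq> 0" "degree b < degree f"
  shows "LL (bas a + bas b - bas ((a * b) mod f)) + delta_gen (Some (x_f f a b)) \<in> qspan (wedge_rel \<union> P0)"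
proof -
  define r where "r = (a * b) mod f"
  define q where "q = (a * b) div f"
  define A where "A = pfr a"
  define B where "B = pfr b"
  define R where "R = pfr r"
  define F where "F = pfr f"
  have abn: "\<not> f dvd a * b" using f_dvd_mult small_ndvd a b by blast
  have r0: "r \<noteq> 0" unfolding r_def by (rule mod_nz[OF abn])
  have rd: "degree r < degree f" unfolding r_def by (rule mod_deg[OF abn])
  have abq: "a * b = q * f + r" unfolding q_def r_def by simp
  have A0: "A \<noteq> 0" "A \<in> V" unfolding A_def by (rule pfr_nz[OF a(1)], rule inV[OF a])
  have B0: "B \<noteq> 0" "B \<in> V" unfolding B_def by (rule pfr_nz[OF b(1)], rule inV[OF b])
  have R0: "R \<noteq> 0" "R \<in> V" unfolding R_def by (rule pfr_nz[OF r0], rule inV[OF r0 rd])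
  have F0: "F \<noteq> 0" using fnz by (simp add: F_def pfr_nz)
  have LLe: "LL (bas a + bas b - bas r) = bas (F, A) + bas (F, B) - bas (F, R)"
    unfolding LL_gen A_def B_def R_def F_def ..
  have xe: "x_f f a b = A * B / R" unfolding x_f_def A_def B_def R_def r_def by (simp add: pfr_mult)
  show ?thesis
  proof (cases "q = 0")
    case True
    then have "a * b = r" using abq by simp
    then have AB: "A * B = R" by (simp add: A_def B_def R_def pfr_mult[symmetric])
    have x1: "x_f f a b = 1" using xe AB R0 by simp
    have dg: "delta_gen (Some (x_f f a b)) = 0" by (simp add: x1 delta_gen_def vzero_eq)
    have "LL (bas a + bas b - bas r) + delta_gen (Some (x_f f a b)) = - (bas (F, A * B) - bas (F, A) - bas (F, B))"
      unfolding LLe dg AB by (simp add: fun_eq_iff)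
    also have "\<dots> \<in> WW" by (rule qspan_neg[OF W_mr[OF F0 A0(1) B0(1)]])
    finally show ?thesis unfolding r_def by (rule W_sub)
  next
    case False
    define Q where "Q = pfr (- q)"
    have Q0: "Q \<noteq> 0" using False by (simp add: Q_def pfr_nz)
    have qdeg: "degree q < degree f"
    proof -
      have h1: "degree (q * f) = degree q + degree f" using False fnz by (rule degree_mult_eq)
      have qf: "q * f = a * b - r" using abq by simp
      have h2: "degree (q * f) \<le> max (degree (a * b)) (degree r)" unfolding qf by (rule degree_diff_le_max)
      have h3: "degree (a * b) = degree a + degree b" using a b by (simp add: degree_mult_eq)
      show ?thesis using h1 h2 h3 a b rd unfolding max_def by (auto split: if_split_asm)
    qed
    have Q1: "Q \<in> V" unfolding Q_def by (rule inV) (use False qdeg in \<open>simp_all\<close>)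
    have ABR: "A * B = pfr q * F + R"
      unfolding A_def B_def F_def R_def by (simp add: pfr_mult[symmetric] pfr_add[symmetric] abq)
    have xL: "x_f f a b = 1 * pw [(A, True), (B, True), (R, False)]" using xe by simp
    have xM: "1 - x_f f a b = 1 * pw [(Q, True), (F, True), (R, False)]"
      unfolding xe ABR using R0 by (simp add: Q_def pfr_minus field_simps)
    have x0: "x_f f a b \<noteq> 0" using xL A0 B0 R0 by simp
    have x1: "1 - x_f f a b \<noteq> 0" using xM Q0 F0 R0 by simp
    have dg: "delta_gen (Some (x_f f a b)) = bas (1 * pw [(A, True), (B, True), (R, False)], 1 * pw [(Q, True), (F, True), (R, False)])"
      unfolding delta_gen_Some[OF x0 x1] by (simp only: xL[symmetric] xM[symmetric])
    have D: "bas (1 * pw [(A, True), (B, True), (R, False)], 1 * pw [(Q, True), (F, True), (R, False)])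
        - EE [(A, True), (B, True), (R, False)] [(Q, True), (F, True), (R, False)] \<in> WW"
      by (rule EE_W_sign) (use A0 B0 R0 Q0 F0 in auto)
    define DD where "DD = bas (1 * pw [(A, True), (B, True), (R, False)], 1 * pw [(Q, True), (F, True), (R, False)])
        - EE [(A, True), (B, True), (R, False)] [(Q, True), (F, True), (R, False)]"
    have eq: "LL (bas a + bas b - bas r) + delta_gen (Some (x_f f a b)) =
       DD + (bas (A, Q) - bas (A, R) + bas (B, Q) - bas (B, R) - bas (R, Q) + bas (R, R))
       + (bas (A, F) + bas (F, A)) + (bas (B, F) + bas (F, B)) - (bas (R, F) + bas (F, R))"
      unfolding LLe dg DD_def by (simp add: fun_eq_iff sg_def algebra_simps)
    have m1: "DD \<in> qspan (wedge_rel \<union> P0)" using D W_sub unfolding DD_def by blast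
    have m2: "bas (A, Q) - bas (A, R) + bas (B, Q) - bas (B, R) - bas (R, Q) + bas (R, R) \<in> qspan (wedge_rel \<union> P0)"
      by (intro qspan_add qspan_diff P0_sub A0 B0 R0 Q1)
    have m3: "bas (A, F) + bas (F, A) \<in> qspan (wedge_rel \<union> P0)" by (rule W_sub[OF W_anti[OF A0(1) F0]])
    have m4: "bas (B, F) + bas (F, B) \<in> qspan (wedge_rel \<union> P0)" by (rule W_sub[OF W_anti[OF B0(1) F0]])
    have m5: "bas (R, F) + bas (F, R) \<in> qspan (wedge_rel \<union> P0)" by (rule W_sub[OF W_anti[OF R0(1) F0]])
    have "LL (bas a + bas b - bas r) + delta_gen (Some (x_f f a b)) \<in> qspan (wedge_rel \<union> P0)"
      unfolding eq by (rule qspan_diff[OF qspan_add[OF qspan_add[OF qspan_add[OF m1 m2] m3] m4] m5])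
    then show ?thesis unfolding r_def .
  qed
qed

end


context fctx begin

lemma fin_supp_NG: "g \<in> NG \<Longrightarrow> fin_supp g"
  unfolding NG_def by (auto intro!: fin_supp_diff fin_supp_add fin_supp_bas)

lemma fin_supp_dg: "fin_supp (delta_gen x)"
  by (cases x) (auto simp: delta_gen_def vzero_eq fin_supp_zero fin_supp_bas)

lemma delta2_add: "fin_supp u \<Longrightarrow> fin_supp v \<Longrightarrow> delta2 (u + v) = delta2 u + delta2 v"
  unfolding delta2_lin by (rule lin_ext_add)
lemma delta2_scale: "fin_supp u \<Longrightarrow> delta2 (\<lambda>x. c * u x) = (\<lambda>z. c * delta2 u z)"
  unfolding delta2_lin by (rule lin_ext_scale)
lemma delta2_zero: "delta2 0 = 0"
  unfolding delta2_lin by (rule lin_ext_zero)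
lemma delta2_bas: "delta2 (bas x) = delta_gen x"
  unfolding delta2_lin by (rule lin_ext_bas)

lemma five_term_eq: "five_term x1 x2 x3 x4 x5 = - bas (cross_ratio x2 x3 x4 x5) + bas (cross_ratio x1 x3 x4 x5)
    - bas (cross_ratio x1 x2 x4 x5) + bas (cross_ratio x1 x2 x3 x5) - bas (cross_ratio x1 x2 x3 x4)"
  by (simp add: five_term_def fun_eq_iff)

lemma step3:
  assumes "s \<in> qspan NG"
  shows "fin_supp s \<and> (\<exists>e. e \<in> qspan XG \<and> fin_supp e \<and> LL s + delta2 e \<in> qspan (wedge_rel \<union> P0))"
  using assms
proof (induction rule: qspan.induct)
  case zero
  have h: "LL 0 + delta2 0 = 0" by (simp only: LL_zero delta2_zero add_0_left)
  have "0 \<in> qspan XG \<and> fin_supp 0 \<and> LL 0 + delta2 0 \<in> qspan (wedge_rel \<union> P0)"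
    unfolding h by (intro conjI qspan_zero fin_supp_zero)
  then show ?case unfolding vzero_eq using fin_supp_zero by blast
next
  case (gen v)
  have vN: "v \<in> NG" by (rule gen)
  then obtain a b where ab: "v = bas a + bas b - bas ((a * b) mod f)" "a \<noteq> 0" "b \<noteq> 0"
    "degree a < degree f" "degree b < degree f" unfolding NG_def by auto
  have k: "LL v + delta2 (bas (Some (x_f f a b))) \<in> qspan (wedge_rel \<union> P0)"
    unfolding delta2_bas ab(1) by (rule xf_key[OF ab(2,4) ab(3,5)])
  have x: "bas (Some (x_f f a b)) \<in> XG" using ab(2-5) by blast
  show ?case
    by (intro conjI exI[of _ "bas (Some (x_f f a b))"] fin_supp_NG[OF vN] qspan_gen[OF x] fin_supp_bas k)
next
  case (add u v)
  then obtain e1 e2 where A: "fin_supp u" "fin_supp v" "e1 \<in> qspan XG" "fin_supp e1"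
    "LL u + delta2 e1 \<in> qspan (wedge_rel \<union> P0)" "e2 \<in> qspan XG" "fin_supp e2"
    "LL v + delta2 e2 \<in> qspan (wedge_rel \<union> P0)" by blast
  have eq: "LL (u + v) + delta2 (e1 + e2) = (LL u + delta2 e1) + (LL v + delta2 e2)"
    by (simp only: LL_add[OF A(1,2)] delta2_add[OF A(4,7)] ac_simps)
  have "LL (vadd u v) + delta2 (e1 + e2) \<in> qspan (wedge_rel \<union> P0)"
    unfolding vadd_eq eq by (rule qspan_add[OF A(5) A(8)])
  moreover have "e1 + e2 \<in> qspan XG" by (rule qspan_add[OF A(3) A(6)])
  moreover have "fin_supp (e1 + e2)" by (rule fin_supp_add[OF A(4) A(7)])
  moreover have "fin_supp (vadd u v)" unfolding vadd_eq by (rule fin_supp_add[OF A(1,2)])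
  ultimately show ?case by blast
next
  case (scale v c)
  then obtain e where A: "fin_supp v" "e \<in> qspan XG" "fin_supp e"
    "LL v + delta2 e \<in> qspan (wedge_rel \<union> P0)" by blast
  have eq: "LL (\<lambda>x. c * v x) + delta2 (\<lambda>x. c * e x) = (\<lambda>z. c * (LL v + delta2 e) z)"
    unfolding LL_scale[OF A(1)] delta2_scale[OF A(3)] by (rule ext) (simp only: plus_fun_apply distrib_left)
  have "LL (vscale c v) + delta2 (\<lambda>x. c * e x) \<in> qspan (wedge_rel \<union> P0)"
    unfolding vscale_def eq by (rule qspan_scale[OF A(4)])
  moreover have "(\<lambda>x. c * e x) \<in> qspan XG" by (rule qspan_scale[OF A(2)])
  moreover have "fin_supp (\<lambda>x. c * e x)" by (rule fin_supp_scale[OF A(3)])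
  moreover have "fin_supp (vscale c v)" unfolding vscale_def by (rule fin_supp_scale[OF A(1)])
  ultimately show ?case by blast
qed

lemma T_dg: "lin_ext Tg (delta_gen x) \<in> qspan NG"
proof (cases x)
  case None
  then show ?thesis by (simp add: delta_gen_def vzero_eq lin_ext_zero qspan_zero)
next
  case (Some a)
  show ?thesis
  proof (cases "a \<noteq> 0 \<and> a \<noteq> 1")
    case True
    then have "lin_ext Tg (delta_gen x) = Tg (a, 1 - a)" by (simp add: Some delta_gen_def lin_ext_bas)
    then show ?thesis using steinberg[of a] True by (simp add: mo_def)
  next
    case False
    then have "delta_gen x = 0" by (auto simp: Some delta_gen_def vzero_eq)
    then show ?thesis by (simp only: lin_ext_zero qspan_zero)
  qed
qed

lemma s_in_N:
  assumes y: "fin_supp y" and e: "delta2 y = w + LL s" and w: "w \<in> qspan (wedge_rel \<union> P0)" and s: "good s"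
  shows "s \<in> qspan NG"
proof -
  have fs: "fin_supp s" using s by (simp add: good_def)
  have TW: "lin_ext Tg w \<in> qspan NG" "fin_supp w" using T_W0[OF w] by auto
  have T1: "lin_ext Tg (delta2 y) \<in> qspan NG"
  proof -
    have "lin_ext Tg (delta2 y) = lin_ext (\<lambda>x. lin_ext Tg (delta_gen x)) y"
      unfolding delta2_lin by (rule lin_ext_comp[OF y fin_supp_dg])
    also have "\<dots> \<in> qspan NG" by (rule lin_ext_in_qspan[OF y T_dg])
    finally show ?thesis .
  qed
  have T2: "lin_ext Tg (delta2 y) = lin_ext Tg w + lin_ext Tg (LL s)"
    unfolding e by (rule lin_ext_add[OF TW(2) fin_supp_LL[OF fs]])
  have T3: "lin_ext Tg (LL s) + s \<in> qspan NG"
  proof -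
    have "lin_ext Tg (LL s) = lin_ext (\<lambda>p. Tg (pfr f, pfr p)) s"
      unfolding LL_def by (simp only: lin_ext_comp[OF fs fin_supp_bas] lin_ext_bas)
    then have "lin_ext Tg (LL s) + s = lin_ext (\<lambda>p. Tg (pfr f, pfr p) + bas p) s"
      using lin_ext_bas_id[OF fs] lin_ext_gadd[of "\<lambda>p. Tg (pfr f, pfr p)" bas s] by simp
    also have "\<dots> \<in> qspan NG"
    proof (rule lin_ext_in_qspan[OF fs])
      fix p assume "s p \<noteq> 0"
      then have p: "p \<noteq> 0" "degree p < degree f" using s by (auto simp: good_def)
      have nd: "\<not> f dvd p" by (rule small_ndvd[OF p])
      have V: "val (pfr p) = 0 \<and> mo NG (res (pfr p)) (cls p)" by (rule val_pfr[OF nd])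
      have cp: "cls p = bas p" using mod_small[OF p(2)] by (simp add: cls_def)
      have "Tg (pfr f, pfr p) + bas p = bas p - res (pfr p)"
        using V val_pfr_f by (simp add: Tg_def fun_eq_iff)
      also have "\<dots> \<in> qspan NG" using V cp by (metis mo_def mo_sym)
      finally show "Tg (pfr f, pfr p) + bas p \<in> qspan NG" .
    qed
    finally show ?thesis .
  qed
  have "s = (lin_ext Tg (LL s) + s) - (lin_ext Tg (delta2 y) - lin_ext Tg w)"
    using T2 by simp
  also have "\<dots> \<in> qspan NG" by (intro qspan_diff T3 T1 TW(1))
  finally show ?thesis .
qed

theorem main:
  "B_sub (Vf_gens f) = qspan (R2_gens \<union> B_sub V \<union> XG)"
proof
  show "B_sub (Vf_gens f) \<subseteq> qspan (R2_gens \<union> B_sub V \<union> XG)"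
  proof
    fix y assume "y \<in> B_sub (Vf_gens f)"
    then have y: "fin_supp y" "delta2 y \<in> qspan (wedge_rel \<union> PV)"
      by (auto simp: B_sub_def in_wedge2_def)
    obtain w s where ws: "delta2 y = w + LL s" "w \<in> qspan (wedge_rel \<union> P0)" "good s"
      using decomp[OF y(2)] by blast
    have sN: "s \<in> qspan NG" by (rule s_in_N[OF y(1) ws])
    obtain e where e: "e \<in> qspan XG" "fin_supp e" "LL s + delta2 e \<in> qspan (wedge_rel \<union> P0)"
      using step3[OF sN] by blast
    have fw: "fin_supp w" using T_W0[OF ws(2)] by simp
    have "delta2 (y + e) = w + (LL s + delta2 e)" using delta2_add[OF y(1) e(2)] ws(1) by (simp add: ac_simps)
    also have "\<dots> \<in> qspan (wedge_rel \<union> P0)" by (rule qspan_add[OF ws(2) e(3)])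
    finally have "y + e \<in> B_sub V" using fin_supp_add[OF y(1) e(2)] by (simp add: B_sub_def in_wedge2_def)
    then have m1: "y + e \<in> qspan (R2_gens \<union> B_sub V \<union> XG)" by (intro qspan_gen) blast
    have m2: "e \<in> qspan (R2_gens \<union> B_sub V \<union> XG)" using e(1) qspan_mono[of XG "R2_gens \<union> B_sub V \<union> XG"] by blast
    have "y = (y + e) - e" by simp
    also have "\<dots> \<in> qspan (R2_gens \<union> B_sub V \<union> XG)" by (rule qspan_diff[OF m1 m2])
    finally show "y \<in> qspan (R2_gens \<union> B_sub V \<union> XG)" .
  qed
next
  have sub: "qspan (wedge_rel \<union> P0) \<subseteq> qspan (wedge_rel \<union> PV)"
    by (rule qspan_mono) (auto simp: Vf_gens_def)
  have WPV: "WW \<subseteq> qspan (wedge_rel \<union> PV)" by (rule qspan_mono) auto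
  have F: "pfr f \<in> Vf_gens f" by (simp add: Vf_gens_def)
  show "qspan (R2_gens \<union> B_sub V \<union> XG) \<subseteq> B_sub (Vf_gens f)"
  proof (rule qspan_subspace)
    show "0 \<in> B_sub (Vf_gens f)"
      by (simp only: B_sub_def in_wedge2_def mem_Collect_eq fin_supp_zero delta2_zero qspan_zero simp_thms)
  next
    fix u v assume "u \<in> B_sub (Vf_gens f)" "v \<in> B_sub (Vf_gens f)"
    then show "u + v \<in> B_sub (Vf_gens f)"
      by (auto simp: B_sub_def in_wedge2_def delta2_add fin_supp_add qspan_add simp del: fun_diff_def)
  next
    fix u :: "'a poly fract option \<Rightarrow> rat" and c assume "u \<in> B_sub (Vf_gens f)"
    then show "(\<lambda>x. c * u x) \<in> B_sub (Vf_gens f)"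
      by (auto simp: B_sub_def in_wedge2_def delta2_scale fin_supp_scale qspan_scale)
  next
    show "R2_gens \<union> B_sub V \<union> XG \<subseteq> B_sub (Vf_gens f)"
    proof (intro Un_least)
      show "R2_gens \<subseteq> B_sub (Vf_gens f)"
      proof
        fix g :: "'a poly fract option \<Rightarrow> rat" assume "g \<in> R2_gens"
        then consider "g = bas (Some 0)" | "g = bas None"
          | x1 x2 x3 x4 x5 where "g = five_term x1 x2 x3 x4 x5" "distinct [x1, x2, x3, x4, x5]"
          unfolding R2_gens_def by blast
        then show "g \<in> B_sub (Vf_gens f)"
        proof cases
          case 1
          have "delta2 g = 0" unfolding 1 delta2_bas by (simp add: delta_gen_def vzero_eq)
          then show ?thesis unfolding B_sub_def in_wedge2_def by (simp add: 1 fin_supp_bas qspan_zero)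
        next
          case 2
          have "delta2 g = 0" unfolding 2 delta2_bas by (simp add: delta_gen_def vzero_eq)
          then show ?thesis unfolding B_sub_def in_wedge2_def by (simp add: 2 fin_supp_bas qspan_zero)
        next
          case 3
          have fs: "fin_supp g" unfolding 3 five_term_eq
            by (intro fin_supp_add fin_supp_diff fin_supp_neg fin_supp_bas)
          have "delta2 g \<in> WW" unfolding 3 by (rule five_W[OF 3(2)])
          then show ?thesis unfolding B_sub_def in_wedge2_def using fs WPV by blast
        qed
      qed
    next
      show "B_sub V \<subseteq> B_sub (Vf_gens f)"
        unfolding B_sub_def in_wedge2_def using sub by blast
    next
      show "XG \<subseteq> B_sub (Vf_gens f)"
      proof
        fix g :: "'a poly fract option \<Rightarrow> rat" assume "g \<in> XG"
        then obtain a b where ab: "g = bas (Some (x_f f a b))" "a \<noteq> 0" "b \<noteq> 0"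
          "degree a < degree f" "degree b < degree f" by blast
        define L where "L = LL (bas a + bas b - bas ((a * b) mod f))"
        have K: "L + delta2 g \<in> qspan (wedge_rel \<union> PV)"
          using xf_key[OF ab(2,4) ab(3,5)] sub unfolding L_def ab(1) delta2_bas by blast
        have abn: "\<not> f dvd a * b" using f_dvd_mult small_ndvd ab by blast
        have inVf: "pfr p \<in> Vf_gens f" if "p \<noteq> 0" "degree p < degree f" for p
          using inV[OF that] by (simp add: Vf_gens_def)
        have Lm: "L \<in> qspan (wedge_rel \<union> PV)"
        proof -
          have "L = bas (pfr f, pfr a) + bas (pfr f, pfr b) - bas (pfr f, pfr ((a * b) mod f))"
            unfolding L_def by (rule LL_gen)
          also have "\<dots> \<in> qspan (wedge_rel \<union> PV)"
            using F inVf[OF ab(2,4)] inVf[OF ab(3,5)] inVf[OF mod_nz[OF abn] mod_deg[OF abn]]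
            by (intro qspan_add qspan_diff qspan_gen UnI2) blast+
          finally show ?thesis .
        qed
        have "delta2 g = (L + delta2 g) - L" by simp
        also have "\<dots> \<in> qspan (wedge_rel \<union> PV)" by (rule qspan_diff[OF K Lm])
        finally show "g \<in> B_sub (Vf_gens f)" unfolding B_sub_def in_wedge2_def using ab(1) fin_supp_bas by simp
      qed
    qed
  qed
qed

end


theorem corollary3:
  fixes f :: "'a::field poly"
  assumes "lead_coeff f = 1" and "irreducible f" and "degree f \<ge> 1"
  shows "B_sub (Vf_gens f) =
           qspan (R2_gens \<union> B_sub (V_gens (degree f - 1)) \<union>
                  {bas (Some (x_f f a b)) | a b. a \<noteq> 0 \<and> b \<noteq> 0 \<and> degree a < degree f \<and> degree b < degree f})"
proof -
  interpret fctx f by unfold_locales (use assms in auto)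
  show ?thesis by (rule main)
qed

end
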